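(* In the $\beta$-model, suppose the true parameter satisfies $\beta_1=\cdots=\beta_r$, for some $r\in\{1,\dots,n-1\}$. If $$\left(\frac{b_n}{c_n}+\frac{b_n^3}{c_n^3}\cdot\frac{r(n-r)}{n^2}\right)\left(b_n+\frac{b_n^3}{c_n^2}\Big(\frac{r^{1/2}(n-r)^{1/2}}{n^{3/2}}+\frac{n-r}{n}\Big)\right)=o\left(\sqrt{\frac{n}{\log n}}\right),$$ then with probability at least $1-2(n-r+1)/n^2$ the restricted MLE $\widehat{\boldsymbol\beta}^0$ exists and satisfies $$\|\widehat{\boldsymbol\beta}^0-\boldsymbol\beta\|_\infty\le C\left(b_n+\frac{b_n^3}{c_n^2}\Big(\frac{r^{1/2}(n-r)^{1/2}}{n^{3/2}}+\frac{n-r}{n}\Big)\right)\sqrt{\frac{\log n}{n}}$$ for an absolute constant $C>0$. Further, if $\widehat{\boldsymbol\beta}^0$ exists, it is unique.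
   Context: $\beta$-model: $a_{ij}=a_{ji}\in\{0,1\}$, $1\le i<j\le n$, independent with $P(a_{ij}=1)=e^{\beta_i+\beta_j}/(1+e^{\beta_i+\beta_j})$, $a_{ii}=0$; $d_i=\sum_{j\ne i}a_{ij}$; $\ell(\boldsymbol\beta)=\sum_i\beta_id_i-\sum_{i<j}\log(1+e^{\beta_i+\beta_j})$. $\widehat{\boldsymbol\beta}^0=\arg\max\{\ell(\boldsymbol\beta):\boldsymbol\beta\in\mathbb R^n,\beta_1=\cdots=\beta_r\}$. $b_n=\max_{i\neq j}(1+e^{\beta_i+\beta_j})^2/e^{\beta_i+\beta_j}$, $c_n=\min_{i\ne j}(\cdot)$ at the true parameter. Asymptotics as $n\to\infty$. *)

theory Defs
  imports "HOL-Analysis.Analysis" "HOL-Library.Landau_Symbols"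
begin

text \<open>Vertices are indexed 0..n-1 (paper: 1..n). A parameter vector in R^n is a
  function nat => real; only the values at indices < n matter (for the restricted
  parameter space we additionally normalise to 0 outside {..<n}).
  A graph on n vertices is its edge set E, a subset of the pairs (i,j) with i<j<n.\<close>

definition vpairs :: "nat \<Rightarrow> (nat \<times> nat) set" where
  "vpairs n = {(i,j). i < j \<and> j < n}"

definition edge_prob :: "(nat \<Rightarrow> real) \<Rightarrow> nat \<Rightarrow> nat \<Rightarrow> real" where
  "edge_prob \<beta> i j = exp (\<beta> i + \<beta> j) / (1 + exp (\<beta> i + \<beta> j))"

definition graph_prob :: "nat \<Rightarrow> (nat \<Rightarrow> real) \<Rightarrow> (nat \<times> nat) set \<Rightarrow> real" where
  "graph_prob n \<beta> E =
     (\<Prod>(i,j)\<in>vpairs n. if (i,j) \<in> E then edge_prob \<beta> i j else 1 - edge_prob \<beta> i j)"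

definition beta_prob :: "nat \<Rightarrow> (nat \<Rightarrow> real) \<Rightarrow> ((nat \<times> nat) set \<Rightarrow> bool) \<Rightarrow> real" where
  "beta_prob n \<beta> P = (\<Sum>E\<in>Pow (vpairs n). if P E then graph_prob n \<beta> E else 0)"

definition adj :: "(nat \<times> nat) set \<Rightarrow> nat \<Rightarrow> nat \<Rightarrow> real" where
  "adj E i j = (if i \<noteq> j \<and> (min i j, max i j) \<in> E then 1 else 0)"

definition degree :: "nat \<Rightarrow> (nat \<times> nat) set \<Rightarrow> nat \<Rightarrow> real" where
  "degree n E i = (\<Sum>j\<in>{..<n} - {i}. adj E i j)"

definition loglik :: "nat \<Rightarrow> (nat \<times> nat) set \<Rightarrow> (nat \<Rightarrow> real) \<Rightarrow> real" where
  "loglik n E \<beta> = (\<Sum>i<n. \<beta> i * degree n E i)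
      - (\<Sum>(i,j)\<in>vpairs n. ln (1 + exp (\<beta> i + \<beta> j)))"

definition restr_space :: "nat \<Rightarrow> nat \<Rightarrow> (nat \<Rightarrow> real) set" where
  "restr_space n r = {\<beta>. (\<forall>i\<ge>n. \<beta> i = 0) \<and> (\<forall>i<r. \<beta> i = \<beta> 0)}"

definition is_restr_mle :: "nat \<Rightarrow> nat \<Rightarrow> (nat \<times> nat) set \<Rightarrow> (nat \<Rightarrow> real) \<Rightarrow> bool" where
  "is_restr_mle n r E b \<longleftrightarrow> b \<in> restr_space n r \<and>
     (\<forall>b'\<in>restr_space n r. loglik n E b' \<le> loglik n E b)"

definition sup_dist :: "nat \<Rightarrow> (nat \<Rightarrow> real) \<Rightarrow> (nat \<Rightarrow> real) \<Rightarrow> real" where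
  "sup_dist n x y = Max ((\<lambda>i. \<bar>x i - y i\<bar>) ` {..<n})"

definition offdiag :: "nat \<Rightarrow> (nat \<times> nat) set" where
  "offdiag n = {(i,j). i < n \<and> j < n \<and> i \<noteq> j}"

definition bn :: "nat \<Rightarrow> (nat \<Rightarrow> real) \<Rightarrow> real" where
  "bn n \<beta> = Max ((\<lambda>(i,j). (1 + exp (\<beta> i + \<beta> j))\<^sup>2 / exp (\<beta> i + \<beta> j)) ` offdiag n)"

definition cn :: "nat \<Rightarrow> (nat \<Rightarrow> real) \<Rightarrow> real" where
  "cn n \<beta> = Min ((\<lambda>(i,j). (1 + exp (\<beta> i + \<beta> j))\<^sup>2 / exp (\<beta> i + \<beta> j)) ` offdiag n)"

definition rate :: "nat \<Rightarrow> nat \<Rightarrow> (nat \<Rightarrow> real) \<Rightarrow> real" where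
  "rate n r \<beta> = bn n \<beta> + (bn n \<beta>)^3 / (cn n \<beta>)^2 *
      (sqrt (real r) * sqrt (real n - real r) / (real n) powr (3/2) + (real n - real r) / real n)"

definition cond_quantity :: "nat \<Rightarrow> nat \<Rightarrow> (nat \<Rightarrow> real) \<Rightarrow> real" where
  "cond_quantity n r \<beta> = (bn n \<beta> / cn n \<beta> + (bn n \<beta>)^3 / (cn n \<beta>)^3 *
      (real r * (real n - real r) / (real n)^2)) * rate n r \<beta>"

end

theory Submission
  imports Defs "HOL-Probability.Hoeffding"
begin



lemma ope_pos [simp]: "0 < 1 + exp (x::real)" by (simp add: add_pos_pos)
lemma ope_nz [simp]: "1 + exp (x::real) \<noteq> 0" using ope_pos[of x] by linarith

definition pf :: "real \<Rightarrow> real" where "pf x = exp x / (1 + exp x)"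
definition Lf :: "real \<Rightarrow> real" where "Lf x = ln (1 + exp x)"
definition vf :: "real \<Rightarrow> real" where "vf x = exp x / (1 + exp x)^2"

lemma Lf_deriv: "(Lf has_real_derivative pf x) (at x)"
  unfolding Lf_def pf_def
  by (rule derivative_eq_intros refl | simp add: add_pos_pos)+

lemma pf_deriv: "(pf has_real_derivative vf x) (at x)"
  unfolding vf_def pf_def
  by (rule derivative_eq_intros refl | simp)+ (simp add: field_simps power2_eq_square)

lemma pf_pos: "0 < pf x" and pf_less1: "pf x < 1"
  by (auto simp: pf_def add_pos_pos)

lemma vf_pos: "0 < vf x" by (simp add: vf_def)

lemma vf_le: "vf x \<le> 1"
proof -
  have "exp x \<le> (1 + exp x)^2" by (simp add: power2_eq_square algebra_simps add_pos_pos)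
  thus ?thesis unfolding vf_def by simp
qed

lemma pf_mono: "x \<le> y \<Longrightarrow> pf x \<le> pf y"
proof -
  assume "x \<le> y"
  have "pf x = 1 - 1/(1+exp x)" "pf y = 1 - 1/(1+exp y)"
    by (auto simp: pf_def field_simps add_pos_pos)
  moreover have "1/(1+exp y) \<le> 1/(1+exp x)"
    using \<open>x \<le> y\<close> by (intro divide_left_mono) (auto simp: add_pos_pos)
  ultimately show ?thesis by simp
qed

lemma pf_slope:
  "\<exists>z. \<bar>z - x\<bar> \<le> \<bar>y - x\<bar> \<and> pf y - pf x = (y - x) * vf z"
proof (cases x y rule: linorder_cases)
  case less
  from MVT2[OF less, of pf vf] pf_deriv obtain z where "z > x" "z < y" "pf y - pf x = (y - x) * vf z"
    by blast
  thus ?thesis by (intro exI[of _ z]) auto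
next
  case equal thus ?thesis by auto
next
  case greater
  from MVT2[OF greater, of pf vf] pf_deriv obtain z where "z > y" "z < x" "pf x - pf y = (x - y) * vf z"
    by blast
  thus ?thesis by (intro exI[of _ z]) (auto simp: algebra_simps)
qed

lemma Lf_tangent: "Lf y \<ge> Lf x + pf x * (y - x)"
proof (cases x y rule: linorder_cases)
  case less
  from MVT2[OF less, of Lf pf] Lf_deriv obtain z where "z > x" "z < y" "Lf y - Lf x = (y - x) * pf z"
    by blast
  moreover have "pf x \<le> pf z" using \<open>z > x\<close> by (intro pf_mono) auto
  moreover have "pf x * (y - x) \<le> pf z * (y - x)" using calculation less by (intro mult_right_mono) auto
  ultimately show ?thesis by (simp add: algebra_simps)
next
  case equal thus ?thesis by auto
next
  case greater
  from MVT2[OF greater, of Lf pf] Lf_deriv obtain z where "z > y" "z < x" "Lf x - Lf y = (x - y) * pf z"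
    by blast
  moreover have "pf z \<le> pf x" using \<open>z < x\<close> by (intro pf_mono) auto
  moreover have "pf x * (y - x) \<le> pf z * (y - x)" using calculation greater by (intro mult_right_mono_neg) auto
  ultimately show ?thesis by (simp add: algebra_simps)
qed

lemma pf_lip: "\<bar>pf y - pf x\<bar> \<le> \<bar>y - x\<bar>"
proof -
  obtain z where "pf y - pf x = (y - x) * vf z" using pf_slope by blast
  moreover have "\<bar>vf z\<bar> \<le> 1" using vf_le vf_pos[of z] by auto
  ultimately show ?thesis by (simp add: abs_mult mult_left_le)
qed

lemma Lf_convex:
  assumes "0 \<le> t" "t \<le> 1"
  shows "Lf ((1-t)*x + t*y) \<le> (1-t) * Lf x + t * Lf y"
proof -
  define z where "z = (1-t)*x + t*y"
  have a: "Lf x \<ge> Lf z + pf z * (x - z)" "Lf y \<ge> Lf z + pf z * (y - z)" by (rule Lf_tangent)+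
  have "(1-t) * Lf x + t * Lf y \<ge> (1-t) * (Lf z + pf z * (x - z)) + t * (Lf z + pf z * (y - z))"
    using a assms by (intro add_mono mult_left_mono) auto
  also have "(1-t) * (Lf z + pf z * (x - z)) + t * (Lf z + pf z * (y - z)) = Lf z"
    by (simp add: z_def algebra_simps)
  finally show ?thesis by (simp add: z_def)
qed

lemma one_plus_exp_ratio:
  fixes x z t :: real
  assumes "\<bar>z - x\<bar> \<le> t"
  shows "(1 + exp x) \<le> exp t * (1 + exp z)"
proof -
  have "x \<le> t + z" using assms by arith
  hence a: "exp x \<le> exp t * exp z" by (simp add: exp_add[symmetric])
  have b: "1 \<le> exp t" using assms by auto
  have "exp t * (1 + exp z) = exp t + exp t * exp z" by (simp add: algebra_simps)
  with a b show ?thesis by linarith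
qed

lemma vf_ratio:
  fixes x z t :: real
  assumes "\<bar>z - x\<bar> \<le> t"
  shows "vf x * exp (-3*t) \<le> vf z" "vf z \<le> vf x * exp (3*t)"
proof -
  have t: "t \<ge> 0" using assms by auto
  have r1: "(1 + exp x) \<le> exp t * (1 + exp z)" using assms by (rule one_plus_exp_ratio)
  have r2: "(1 + exp z) \<le> exp t * (1 + exp x)" using assms by (intro one_plus_exp_ratio) auto
  have "x \<le> t + z" "z \<le> t + x" using assms by arith+
  hence e1: "exp x \<le> exp t * exp z" "exp z \<le> exp t * exp x" by (auto simp: exp_add[symmetric])
  have sq1: "(1 + exp x)^2 \<le> (exp t * (1 + exp z))^2"
    using r1 by (intro power_mono) (auto intro: less_imp_le)
  have sq2: "(1 + exp z)^2 \<le> (exp t * (1 + exp x))^2"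
    using r2 by (intro power_mono) (auto intro: less_imp_le)
  have eq1: "vf x * exp (-3*t) = (exp x * exp (-t)) / ((exp t * (1 + exp x))^2)"
    unfolding vf_def by (simp add: exp_minus power2_eq_square field_simps exp_of_nat_mult[symmetric]
      flip: exp_add)
  have "(exp x * exp (-t)) / ((exp t * (1 + exp x))^2) \<le> exp z / (1 + exp z)^2"
  proof (rule frac_le)
    show "exp x * exp (- t) \<le> exp z" using e1 by (simp add: exp_minus field_simps)
  qed (use sq2 in auto)
  thus "vf x * exp (-3*t) \<le> vf z" using eq1 by (simp add: vf_def)
  have eq2: "vf x * exp (3*t) = (exp x * exp t) / ((1 + exp x)^2 * exp (-2*t))"
    unfolding vf_def by (simp add: exp_minus power2_eq_square field_simps flip: exp_add)
  have "exp z / (1 + exp z)^2 \<le> (exp x * exp t) / ((1 + exp x)^2 * exp (-2*t))"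
  proof (rule frac_le)
    show "(1 + exp x)^2 * exp (-2*t) \<le> (1 + exp z)^2"
    proof -
      have "(1 + exp x)^2 * exp (-2*t) \<le> (exp t * (1 + exp z))^2 * exp (-2*t)"
        using sq1 by (intro mult_right_mono) auto
      also have "\<dots> = (1 + exp z)^2 * ((exp t)^2 * exp (-2*t))" by (simp add: power_mult_distrib)
      also have "(exp t)^2 * exp (-2*t) = 1" by (simp add: power2_eq_square flip: exp_add)
      finally show ?thesis by simp
    qed
    show "exp z \<le> exp x * exp t" using e1 by (simp add: field_simps)
  qed auto
  thus "vf z \<le> vf x * exp (3*t)" using eq2 by (simp add: vf_def)
qed



lemma finite_vpairs [simp]: "finite (vpairs n)"
proof -
  have "vpairs n \<subseteq> {..<n} \<times> {..<n}" by (auto simp: vpairs_def)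
  thus ?thesis by (rule finite_subset) auto
qed

lemma offdiag_Sigma: "offdiag n = Sigma {..<n} (\<lambda>i. {..<n} - {i})"
  by (auto simp: offdiag_def)

lemma offdiag_split: "offdiag n = vpairs n \<union> prod.swap ` vpairs n"
  by (auto simp: offdiag_def vpairs_def image_iff)

lemma sum_offdiag:
  "(\<Sum>(i,j)\<in>offdiag n. g i j) = (\<Sum>(i,j)\<in>vpairs n. g i j + g j i)"
proof -
  have d: "vpairs n \<inter> prod.swap ` vpairs n = {}" by (auto simp: vpairs_def)
  have "(\<Sum>(i,j)\<in>offdiag n. g i j) = (\<Sum>(i,j)\<in>vpairs n. g i j) + (\<Sum>(i,j)\<in>prod.swap ` vpairs n. g i j)"
    unfolding offdiag_split by (rule sum.union_disjoint) (use d in auto)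
  also have "(\<Sum>(i,j)\<in>prod.swap ` vpairs n. g i j) = (\<Sum>(i,j)\<in>vpairs n. g j i)"
    by (subst sum.reindex) (auto simp: case_prod_unfold)
  finally show ?thesis by (simp add: sum.distrib case_prod_unfold)
qed

lemma sum_rows:
  "(\<Sum>i<n. \<Sum>l\<in>{..<n} - {i}. g i l) = (\<Sum>(i,j)\<in>offdiag n. g i j)"
  unfolding offdiag_Sigma by (rule sum.Sigma) auto

lemma double_count:
  fixes f :: "nat \<Rightarrow> nat \<Rightarrow> real" and w :: "nat \<Rightarrow> real"
  assumes sym: "\<And>i j. f i j = f j i"
  shows "(\<Sum>(i,j)\<in>vpairs n. (w i + w j) * f i j) = (\<Sum>i<n. w i * (\<Sum>l\<in>{..<n} - {i}. f i l))"
proof -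
  have "(\<Sum>i<n. w i * (\<Sum>l\<in>{..<n} - {i}. f i l)) = (\<Sum>i<n. \<Sum>l\<in>{..<n} - {i}. w i * f i l)"
    by (intro sum.cong refl) (rule sum_distrib_left)
  also have "\<dots> = (\<Sum>(i,j)\<in>vpairs n. w i * f i j + w j * f j i)"
    by (simp add: sum_rows sum_offdiag)
  also have "\<dots> = (\<Sum>(i,j)\<in>vpairs n. (w i + w j) * f i j)"
    by (intro sum.cong refl) (auto simp: sym algebra_simps)
  finally show ?thesis by simp
qed

definition ind :: "(nat \<times> nat) set \<Rightarrow> nat \<Rightarrow> nat \<Rightarrow> real" where
  "ind E i j = (if (i,j) \<in> E then 1 else 0)"

lemma adj_sym: "adj E i j = adj E j i"
  by (auto simp: adj_def min_def max_def)

lemma adj_vpairs: "(i,j) \<in> vpairs n \<Longrightarrow> adj E i j = ind E i j"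
  by (auto simp: adj_def ind_def vpairs_def min_def max_def)

definition mu :: "nat \<Rightarrow> (nat \<Rightarrow> real) \<Rightarrow> nat \<Rightarrow> real" where
  "mu n \<theta> i = (\<Sum>l\<in>{..<n} - {i}. pf (\<theta> i + \<theta> l))"

lemma loglik_pairs:
  "loglik n E \<theta> = (\<Sum>(i,j)\<in>vpairs n. (\<theta> i + \<theta> j) * ind E i j - Lf (\<theta> i + \<theta> j))"
proof -
  have "(\<Sum>i<n. \<theta> i * degree n E i) = (\<Sum>(i,j)\<in>vpairs n. (\<theta> i + \<theta> j) * adj E i j)"
    unfolding degree_def by (rule double_count[symmetric]) (rule adj_sym)
  also have "\<dots> = (\<Sum>(i,j)\<in>vpairs n. (\<theta> i + \<theta> j) * ind E i j)"
    by (intro sum.cong refl) (auto simp: adj_vpairs)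
  finally show ?thesis unfolding loglik_def Lf_def
    by (simp add: sum_subtractf case_prod_unfold)
qed

lemma resid_pairs:
  "(\<Sum>(i,j)\<in>vpairs n. (w i + w j) * (ind E i j - pf (\<theta> i + \<theta> j)))
     = (\<Sum>i<n. w i * (degree n E i - mu n \<theta> i))"
proof -
  have "(\<Sum>(i,j)\<in>vpairs n. (w i + w j) * (ind E i j - pf (\<theta> i + \<theta> j)))
      = (\<Sum>(i,j)\<in>vpairs n. (w i + w j) * (adj E i j - pf (\<theta> i + \<theta> j)))"
    by (intro sum.cong refl) (auto simp: adj_vpairs)
  also have "\<dots> = (\<Sum>i<n. w i * (\<Sum>l\<in>{..<n} - {i}. adj E i l - pf (\<theta> i + \<theta> l)))"
    by (rule double_count) (simp add: adj_sym add.commute)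
  also have "\<dots> = (\<Sum>i<n. w i * (degree n E i - mu n \<theta> i))"
    by (simp add: degree_def mu_def sum_subtractf)
  finally show ?thesis .
qed




lemma sum_pow_prod:
  fixes f g :: "'a \<Rightarrow> real"
  assumes "finite A"
  shows "(\<Sum>X\<in>Pow A. \<Prod>x\<in>A. if x \<in> X then f x else g x) = (\<Prod>x\<in>A. f x + g x)"
proof -
  have "(\<Prod>x\<in>A. f x + g x) = (\<Sum>X\<in>Pow A. (\<Prod>x\<in>X. f x) * (\<Prod>x\<in>A-X. g x))"
    using assms by (rule prod_add)
  also have "\<dots> = (\<Sum>X\<in>Pow A. \<Prod>x\<in>A. if x \<in> X then f x else g x)"
  proof (intro sum.cong refl)
    fix X assume "X \<in> Pow A"
    hence "A \<inter> {x. x \<in> X} = X" "A \<inter> - {x. x \<in> X} = A - X" by auto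
    thus "(\<Prod>x\<in>X. f x) * (\<Prod>x\<in>A-X. g x) = (\<Prod>x\<in>A. if x \<in> X then f x else g x)"
      using assms by (simp add: prod.If_cases)
  qed
  finally show ?thesis by simp
qed

lemma edge_prob_pf: "edge_prob \<beta> i j = pf (\<beta> i + \<beta> j)"
  by (simp add: edge_prob_def pf_def)

lemma graph_prob_nonneg: "graph_prob n \<beta> E \<ge> 0"
  unfolding graph_prob_def edge_prob_pf
  using pf_pos pf_less1 by (intro prod_nonneg) (auto simp: case_prod_unfold less_imp_le)

lemma graph_prob_total: "(\<Sum>E\<in>Pow (vpairs n). graph_prob n \<beta> E) = 1"
proof -
  have "(\<Sum>E\<in>Pow (vpairs n). graph_prob n \<beta> E) =
     (\<Prod>e\<in>vpairs n. edge_prob \<beta> (fst e) (snd e) + (1 - edge_prob \<beta> (fst e) (snd e)))"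
    unfolding graph_prob_def case_prod_unfold prod.collapse by (rule sum_pow_prod) simp
  also have "\<dots> = 1" by simp
  finally show ?thesis .
qed

lemma bp_nonneg: "beta_prob n \<beta> P \<ge> 0"
  unfolding beta_prob_def by (intro sum_nonneg) (auto simp: graph_prob_nonneg)

lemma bp_mono: "(\<And>E. E \<subseteq> vpairs n \<Longrightarrow> P E \<Longrightarrow> Q E) \<Longrightarrow> beta_prob n \<beta> P \<le> beta_prob n \<beta> Q"
  unfolding beta_prob_def by (intro sum_mono) (auto simp: graph_prob_nonneg)

lemma bp_compl: "beta_prob n \<beta> P = 1 - beta_prob n \<beta> (\<lambda>E. \<not> P E)"
proof -
  have "beta_prob n \<beta> P + beta_prob n \<beta> (\<lambda>E. \<not> P E) = (\<Sum>E\<in>Pow (vpairs n). graph_prob n \<beta> E)"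
    unfolding beta_prob_def by (subst sum.distrib[symmetric]) (intro sum.cong refl, auto)
  thus ?thesis using graph_prob_total[of n \<beta>] by simp
qed

lemma bp_union:
  assumes "finite K"
  shows "beta_prob n \<beta> (\<lambda>E. \<exists>k\<in>K. Q k E) \<le> (\<Sum>k\<in>K. beta_prob n \<beta> (Q k))"
proof -
  have "beta_prob n \<beta> (\<lambda>E. \<exists>k\<in>K. Q k E) \<le>
      (\<Sum>E\<in>Pow (vpairs n). \<Sum>k\<in>K. if Q k E then graph_prob n \<beta> E else 0)"
    unfolding beta_prob_def
  proof (intro sum_mono)
    fix E assume "E \<in> Pow (vpairs n)"
    show "(if \<exists>k\<in>K. Q k E then graph_prob n \<beta> E else 0) \<le> (\<Sum>k\<in>K. if Q k E then graph_prob n \<beta> E else 0)"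
    proof (cases "\<exists>k\<in>K. Q k E")
      case True
      then obtain k where k: "k \<in> K" "Q k E" by blast
      have "graph_prob n \<beta> E = (if Q k E then graph_prob n \<beta> E else 0)" using k by simp
      also have "\<dots> \<le> (\<Sum>k\<in>K. if Q k E then graph_prob n \<beta> E else 0)"
        by (rule member_le_sum) (use k assms in \<open>auto simp: graph_prob_nonneg\<close>)
      finally show ?thesis using True by simp
    next
      case False thus ?thesis by (auto intro!: sum_nonneg simp: graph_prob_nonneg)
    qed
  qed
  also have "\<dots> = (\<Sum>k\<in>K. beta_prob n \<beta> (Q k))"
    unfolding beta_prob_def by (rule sum.swap)
  finally show ?thesis .
qed

lemma hoeff_aux:
  fixes q y :: real
  assumes "0 \<le> q" "q \<le> 1"
  shows "q * exp (y * (1 - q)) + (1 - q) * exp (- y * q) \<le> exp (y^2 / 8)"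
proof -
  have main: "p * exp (h * (1 - p)) + (1 - p) * exp (- h * p) \<le> exp (h^2 / 8)"
    if "0 \<le> h" "0 \<le> p" "p \<le> 1" for h p :: real
  proof -
    have pos: "0 < 1 + p * (exp h - 1)"
      using that by (smt (verit) mult_nonneg_nonneg one_le_exp_iff)
    have "-h * p + ln (1 + p * (exp h - 1)) \<le> h^2 / 8"
      using Hoeffdings_lemma_aux[of h p] that by simp
    hence "exp (-h * p + ln (1 + p * (exp h - 1))) \<le> exp (h^2/8)" by simp
    also have "exp (-h * p + ln (1 + p * (exp h - 1))) = exp (-h*p) * (1 + p * (exp h - 1))"
      using pos by (simp only: exp_add exp_ln)
    also have "\<dots> = p * exp (h * (1 - p)) + (1 - p) * exp (- h * p)"
      by (simp add: algebra_simps exp_diff exp_minus field_simps flip: exp_add)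
    finally show ?thesis by simp
  qed
  show ?thesis
  proof (cases "y \<ge> 0")
    case True thus ?thesis using main[of y q] assms by simp
  next
    case False
    have "(1 - q) * exp ((-y) * (1 - (1 - q))) + (1 - (1 - q)) * exp (- (-y) * (1 - q)) \<le> exp ((-y)^2 / 8)"
      using False assms by (intro main) auto
    thus ?thesis by (simp add: algebra_simps)
  qed
qed

definition lin_stat :: "nat \<Rightarrow> (nat \<Rightarrow> real) \<Rightarrow> (nat \<Rightarrow> nat \<Rightarrow> real) \<Rightarrow> (nat \<times> nat) set \<Rightarrow> real" where
  "lin_stat n \<beta> c E = (\<Sum>(i,j)\<in>vpairs n. c i j * (ind E i j - edge_prob \<beta> i j))"

lemma hoeffding_upper:
  assumes t: "t > 0" and V: "(\<Sum>(i,j)\<in>vpairs n. (c i j)^2) \<le> W" "W > 0"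
  shows "beta_prob n \<beta> (\<lambda>E. lin_stat n \<beta> c E \<ge> t) \<le> exp (- 2 * t^2 / W)"
proof -
  define l where "l = 4 * t / W"
  have l: "l > 0" using t V by (simp add: l_def)
  define q where "q = (\<lambda>e. edge_prob \<beta> (fst e) (snd e))"
  define cc where "cc = (\<lambda>e. c (fst e) (snd e))"
  have q01: "0 \<le> q e" "q e \<le> 1" for e
    unfolding q_def edge_prob_pf using pf_pos pf_less1 by (auto intro: less_imp_le)
  have "beta_prob n \<beta> (\<lambda>E. lin_stat n \<beta> c E \<ge> t) \<le>
        (\<Sum>E\<in>Pow (vpairs n). exp (l * (lin_stat n \<beta> c E - t)) * graph_prob n \<beta> E)"
    unfolding beta_prob_def
  proof (intro sum_mono)
    fix E
    show "(if lin_stat n \<beta> c E \<ge> t then graph_prob n \<beta> E else 0) \<le>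
       exp (l * (lin_stat n \<beta> c E - t)) * graph_prob n \<beta> E"
    proof (cases "lin_stat n \<beta> c E \<ge> t")
      case True
      hence "1 \<le> exp (l * (lin_stat n \<beta> c E - t))" using l by simp
      thus ?thesis using True graph_prob_nonneg[of n \<beta> E] by (simp add: mult_le_cancel_right1)
    qed (simp add: graph_prob_nonneg)
  qed
  also have "\<dots> = exp (- l * t) * (\<Sum>E\<in>Pow (vpairs n). \<Prod>e\<in>vpairs n.
       if e \<in> E then q e * exp (l * cc e * (1 - q e)) else (1 - q e) * exp (- (l * cc e) * q e))"
  proof -
    have "exp (l * (lin_stat n \<beta> c E - t)) * graph_prob n \<beta> E = exp (- l * t) * (\<Prod>e\<in>vpairs n.
       if e \<in> E then q e * exp (l * cc e * (1 - q e)) else (1 - q e) * exp (- (l * cc e) * q e))" for E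
    proof -
      have "exp (l * lin_stat n \<beta> c E) = (\<Prod>e\<in>vpairs n. exp (l * (cc e * ((if e \<in> E then 1 else 0) - q e))))"
        unfolding lin_stat_def case_prod_unfold sum_distrib_left ind_def q_def cc_def
        by (simp add: exp_sum)
      moreover have "graph_prob n \<beta> E = (\<Prod>e\<in>vpairs n. if e \<in> E then q e else 1 - q e)"
        unfolding graph_prob_def case_prod_unfold q_def by simp
      ultimately have "exp (l * lin_stat n \<beta> c E) * graph_prob n \<beta> E = (\<Prod>e\<in>vpairs n.
         exp (l * (cc e * ((if e \<in> E then 1 else 0) - q e))) * (if e \<in> E then q e else 1 - q e))"
        by (simp add: prod.distrib)
      also have "\<dots> = (\<Prod>e\<in>vpairs n.
       if e \<in> E then q e * exp (l * cc e * (1 - q e)) else (1 - q e) * exp (- (l * cc e) * q e))"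
        by (intro prod.cong refl) (auto simp: algebra_simps)
      finally show ?thesis by (simp add: algebra_simps exp_diff exp_minus field_simps)
    qed
    thus ?thesis by (simp add: sum_distrib_left)
  qed
  also have "\<dots> = exp (- l * t) * (\<Prod>e\<in>vpairs n. q e * exp (l * cc e * (1 - q e)) + (1 - q e) * exp (- (l * cc e) * q e))"
    by (subst sum_pow_prod) auto
  also have "\<dots> \<le> exp (- l * t) * (\<Prod>e\<in>vpairs n. exp ((l * cc e)^2 / 8))"
  proof (intro mult_left_mono prod_mono conjI)
    fix e
    show "0 \<le> q e * exp (l * cc e * (1 - q e)) + (1 - q e) * exp (- (l * cc e) * q e)"
      using q01[of e] by (intro add_nonneg_nonneg mult_nonneg_nonneg) auto
    show "q e * exp (l * cc e * (1 - q e)) + (1 - q e) * exp (- (l * cc e) * q e) \<le> exp ((l * cc e)^2 / 8)"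
      using q01[of e] by (rule hoeff_aux)
  qed simp
  also have "(\<Prod>e\<in>vpairs n. exp ((l * cc e)^2 / 8)) = exp (l^2 / 8 * (\<Sum>e\<in>vpairs n. (cc e)^2))"
    by (simp add: exp_sum[symmetric] sum_distrib_left power_mult_distrib)
  also have "exp (- l * t) * exp (l^2 / 8 * (\<Sum>e\<in>vpairs n. (cc e)^2)) \<le> exp (- l * t) * exp (l^2 / 8 * W)"
    using V(1) by (intro mult_left_mono) (auto simp: cc_def case_prod_unfold intro!: mult_left_mono)
  also have "\<dots> = exp (- 2 * t^2 / W)"
    using V(2) by (simp add: l_def flip: exp_add) (simp add: field_simps power2_eq_square)
  finally show ?thesis .
qed

lemma lin_stat_neg: "lin_stat n \<beta> (\<lambda>i j. - c i j) E = - lin_stat n \<beta> c E"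
  unfolding lin_stat_def by (simp add: case_prod_unfold sum_negf)

lemma hoeffding_abs:
  assumes t: "t > 0" and V: "(\<Sum>(i,j)\<in>vpairs n. (c i j)^2) \<le> W" "W > 0"
  shows "beta_prob n \<beta> (\<lambda>E. \<bar>lin_stat n \<beta> c E\<bar> > t) \<le> 2 * exp (- 2 * t^2 / W)"
proof -
  have "beta_prob n \<beta> (\<lambda>E. \<bar>lin_stat n \<beta> c E\<bar> > t) \<le>
     beta_prob n \<beta> (\<lambda>E. \<exists>k\<in>{True, False}. lin_stat n \<beta> (\<lambda>i j. (if k then 1 else -1) * c i j) E \<ge> t)"
    by (intro bp_mono) (auto simp: lin_stat_neg[of n \<beta> c, simplified])
  also have "\<dots> \<le> (\<Sum>k\<in>{True, False}. beta_prob n \<beta> (\<lambda>E. lin_stat n \<beta> (\<lambda>i j. (if k then 1 else -1) * c i j) E \<ge> t))"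
    by (rule bp_union) simp
  also have "\<dots> \<le> (\<Sum>k\<in>{True, False}. exp (- 2 * t^2 / W))"
    by (intro sum_mono hoeffding_upper t) (use V in \<open>auto simp: power_mult_distrib\<close>)
  finally show ?thesis by simp
qed




lemma loglik_cont: "continuous_on UNIV (loglik n E)"
proof -
  have a: "continuous_on UNIV (\<lambda>x::nat\<Rightarrow>real. ln (1 + exp (x a + x b)))" for a b
    by (intro continuous_on_ln continuous_intros continuous_on_product_coordinates) auto
  have c1: "continuous_on UNIV (\<lambda>x::nat\<Rightarrow>real. \<Sum>i<n. x i * degree n E i)"
    by (intro continuous_on_sum continuous_on_mult_right continuous_on_product_coordinates)
  have c2: "continuous_on UNIV (\<lambda>x::nat\<Rightarrow>real. \<Sum>(i,j)\<in>vpairs n. ln (1 + exp (x i + x j)))"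
    by (intro continuous_on_sum) (auto simp: case_prod_unfold a)
  show ?thesis unfolding loglik_def using continuous_on_diff[OF c1 c2] by simp
qed

lemma compact_PiE_real:
  fixes S :: "'i \<Rightarrow> real set"
  assumes "\<And>i. compact (S i)"
  shows "compact (PiE UNIV S)"
proof -
  have "compactin (product_topology (\<lambda>i. euclidean) UNIV) (PiE UNIV S)"
    unfolding compactin_PiE using assms by auto
  thus ?thesis unfolding euclidean_product_topology by simp
qed

definition boxset :: "nat \<Rightarrow> nat \<Rightarrow> (nat \<Rightarrow> real) \<Rightarrow> real \<Rightarrow> (nat \<Rightarrow> real) set" where
  "boxset n r c d = {\<theta> \<in> restr_space n r. \<forall>i<n. \<bar>\<theta> i - c i\<bar> \<le> d}"

lemma box_max_exists:
  assumes "0 < r" "r < n" "c \<in> restr_space n r" "0 \<le> d"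
  shows "\<exists>\<theta>\<in>boxset n r c d. \<forall>\<theta>'\<in>boxset n r c d. loglik n E \<theta>' \<le> loglik n E \<theta>"
proof -
  define S where "S = (\<lambda>i::nat. if i = 0 \<or> (r \<le> i \<and> i < n) then {c i - d .. c i + d} else {0::real})"
  define \<Phi> where "\<Phi> = (\<lambda>(x::nat \<Rightarrow> real) i. if i < r then x 0 else x i)"
  have cS: "compact (PiE UNIV S)" by (rule compact_PiE_real) (auto simp: S_def)
  have cPhi: "continuous_on UNIV \<Phi>"
    unfolding \<Phi>_def
  proof (intro continuous_on_coordinatewise_then_product)
    fix i show "continuous_on UNIV (\<lambda>x::nat\<Rightarrow>real. if i < r then x 0 else x i)"
      by (cases "i < r") (simp_all add: continuous_on_product_coordinates)
  qed
  have cK: "compact (\<Phi> ` PiE UNIV S)"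
    by (rule compact_continuous_image) (use cPhi cS in \<open>auto intro: continuous_on_subset\<close>)
  have eq: "\<Phi> ` PiE UNIV S = boxset n r c d"
  proof
    show "\<Phi> ` PiE UNIV S \<subseteq> boxset n r c d"
    proof
      fix \<theta> assume "\<theta> \<in> \<Phi> ` PiE UNIV S"
      then obtain x where x: "x \<in> PiE UNIV S" "\<theta> = \<Phi> x" by blast
      have xi: "x i \<in> S i" for i using x(1) by auto
      have c0: "c i = c 0" if "i < r" for i using assms(3) that unfolding restr_space_def by blast
      have "\<theta> i = 0" if "i \<ge> n" for i using xi[of i] that assms(2) unfolding x(2) \<Phi>_def S_def by simp
      moreover have "\<theta> i = \<theta> 0" if "i < r" for i using that assms(1) unfolding x(2) \<Phi>_def by simp
      moreover have "\<bar>\<theta> i - c i\<bar> \<le> d" if "i < n" for i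
      proof (cases "i < r")
        case True thus ?thesis using xi[of 0] c0[OF True] assms(1) that unfolding x(2) \<Phi>_def S_def by (simp add: abs_le_iff)
      next
        case False thus ?thesis using xi[of i] that unfolding x(2) \<Phi>_def S_def by (simp add: abs_le_iff)
      qed
      ultimately show "\<theta> \<in> boxset n r c d" unfolding boxset_def restr_space_def by blast
    qed
  next
    show "boxset n r c d \<subseteq> \<Phi> ` PiE UNIV S"
    proof
      fix \<theta> assume th: "\<theta> \<in> boxset n r c d"
      define x where "x = (\<lambda>i. if 0 < i \<and> i < r then 0 else \<theta> i)"
      have "\<Phi> x = \<theta>"
      proof
        fix i
        have r: "\<theta> i = \<theta> 0" if "i < r" using th that unfolding boxset_def restr_space_def by blast
        show "\<Phi> x i = \<theta> i"
          by (cases "i < r") (use r in \<open>simp_all add: \<Phi>_def x_def\<close>)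
      qed
      moreover have "x \<in> PiE UNIV S"
      proof -
        have "x i \<in> S i" for i
        proof -
          consider "i = 0" | "0 < i \<and> i < r" | "r \<le> i \<and> i < n" | "n \<le> i" by linarith
          thus ?thesis
          proof cases
            case 1
            have "n > 0" using assms by simp
            thus ?thesis using 1 th unfolding x_def S_def boxset_def by (force simp: abs_le_iff)
          next
            case 2 thus ?thesis unfolding x_def S_def by simp
          next
            case 3 thus ?thesis using th unfolding x_def S_def boxset_def by (force simp: abs_le_iff)
          next
            case 4 thus ?thesis using th assms(2) unfolding x_def S_def boxset_def restr_space_def by simp
          qed
        qed
        thus ?thesis by auto
      qed
      ultimately show "\<theta> \<in> \<Phi> ` PiE UNIV S" by blast
    qed
  qed
  have ne: "boxset n r c d \<noteq> {}" using assms by (auto simp: boxset_def intro!: exI[of _ c])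
  have "continuous_on (boxset n r c d) (loglik n E)"
    using loglik_cont by (rule continuous_on_subset) auto
  from continuous_attains_sup[OF cK[unfolded eq] ne this] show ?thesis by blast
qed




lemma opt_dir:
  assumes s0: "s0 > 0"
    and opt: "\<And>s. 0 < s \<Longrightarrow> s \<le> s0 \<Longrightarrow> loglik n E (\<lambda>i. \<theta> i - s * w i) \<le> loglik n E \<theta>"
  shows "0 \<le> (\<Sum>(i,j)\<in>vpairs n. (w i + w j) * (ind E i j - pf (\<theta> i + \<theta> j)))"
proof -
  define D where "D = (\<Sum>(i,j)\<in>vpairs n. (w i + w j) * (ind E i j - pf (\<theta> i + \<theta> j)))"
  define U where "U = (\<Sum>(i,j)\<in>vpairs n. (w i + w j)^2)"
  have U0: "U \<ge> 0" unfolding U_def by (intro sum_nonneg) auto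
  have key: "0 \<le> s * D + s^2 * U" if s: "0 < s" "s \<le> s0" for s
  proof -
    have tm: "s * u * a - (Lf x - Lf (x - s * u)) \<le> s * (u * (a - pf x)) + s^2 * u^2"
      for u a x :: real
    proof -
      have t: "Lf x \<ge> Lf (x - s*u) + pf (x - s*u) * (x - (x - s*u))" by (rule Lf_tangent)
      have l0: "\<bar>pf (x - s*u) - pf x\<bar> \<le> \<bar>(x - s*u) - x\<bar>" by (rule pf_lip)
      have e: "\<bar>(x - s*u) - x\<bar> = \<bar>s*u\<bar>" by simp
      have l: "\<bar>pf (x - s*u) - pf x\<bar> \<le> \<bar>s*u\<bar>" using l0 e by linarith
      have "(pf (x - s*u) - pf x) * (s*u) \<ge> - (\<bar>s*u\<bar> * \<bar>s*u\<bar>)"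
      proof -
        have "\<bar>(pf (x - s*u) - pf x) * (s*u)\<bar> = \<bar>pf (x - s*u) - pf x\<bar> * \<bar>s*u\<bar>" by (rule abs_mult)
        also have "\<dots> \<le> \<bar>s*u\<bar> * \<bar>s*u\<bar>" by (intro mult_right_mono l) auto
        finally have "\<bar>(pf (x - s*u) - pf x) * (s*u)\<bar> \<le> \<bar>s*u\<bar> * \<bar>s*u\<bar>" .
        thus ?thesis by (simp add: abs_le_iff)
      qed
      moreover have "\<bar>s*u\<bar> * \<bar>s*u\<bar> = s^2 * u^2"
        by (metis abs_mult_self_eq power2_eq_square power_mult_distrib)
      ultimately show ?thesis using t by (simp add: algebra_simps)
    qed
    have "0 \<le> loglik n E \<theta> - loglik n E (\<lambda>i. \<theta> i - s * w i)" using opt[OF s] by simp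
    also have "\<dots> = (\<Sum>(i,j)\<in>vpairs n. s * (w i + w j) * ind E i j
        - (Lf (\<theta> i + \<theta> j) - Lf ((\<theta> i + \<theta> j) - s * (w i + w j))))"
      unfolding loglik_pairs by (subst sum_subtractf[symmetric]) (intro sum.cong refl, auto simp: algebra_simps)
    also have "\<dots> \<le> (\<Sum>(i,j)\<in>vpairs n. s * ((w i + w j) * (ind E i j - pf (\<theta> i + \<theta> j))) + s^2 * (w i + w j)^2)"
      by (intro sum_mono) (auto simp: tm)
    also have "\<dots> = s * D + s^2 * U"
      by (simp add: D_def U_def sum.distrib sum_distrib_left case_prod_unfold)
    finally show ?thesis .
  qed
  show ?thesis
  proof (rule ccontr)
    assume "\<not> ?thesis"
    hence D: "D < 0" by (simp add: D_def)
    define s where "s = min s0 (- D / (2 * U + 1))"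
    have "- D / (2 * U + 1) > 0" using D U0 by (intro divide_pos_pos) auto
    hence s: "0 < s" "s \<le> s0" using s0 by (auto simp: s_def)
    have "s * U \<le> (- D / (2 * U + 1)) * U" using U0 by (intro mult_right_mono) (auto simp: s_def)
    also have "\<dots> < - D / 2"
    proof -
      have "(- D / (2 * U + 1)) * U = - D * (U / (2 * U + 1))" by simp
      also have "U / (2 * U + 1) < 1/2" using U0 by (simp add: field_simps)
      hence "- D * (U / (2 * U + 1)) < - D * (1/2)" using D by (intro mult_strict_left_mono) auto
      finally show ?thesis by simp
    qed
    finally have "D + s * U < 0" using D by simp
    hence "s * (D + s * U) < 0" using s by (simp add: mult_pos_neg)
    with key[OF s] show False by (simp add: algebra_simps power2_eq_square)
  qed
qed

lemma loglik_concave: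
  assumes "0 \<le> t" "t \<le> 1"
  shows "loglik n E (\<lambda>i. (1 - t) * \<theta> i + t * \<eta> i) \<ge> (1 - t) * loglik n E \<theta> + t * loglik n E \<eta>"
proof -
  have "(1 - t) * loglik n E \<theta> + t * loglik n E \<eta> =
    (\<Sum>(i,j)\<in>vpairs n. ((1-t) * (\<theta> i + \<theta> j) + t * (\<eta> i + \<eta> j)) * ind E i j
        - ((1-t) * Lf (\<theta> i + \<theta> j) + t * Lf (\<eta> i + \<eta> j)))"
    unfolding loglik_pairs sum_distrib_left sum.distrib[symmetric]
    by (intro sum.cong refl) (auto simp: algebra_simps)
  also have "\<dots> \<le> (\<Sum>(i,j)\<in>vpairs n. ((1-t) * (\<theta> i + \<theta> j) + t * (\<eta> i + \<eta> j)) * ind E i j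
        - Lf ((1-t) * (\<theta> i + \<theta> j) + t * (\<eta> i + \<eta> j)))"
  proof (intro sum_mono)
    fix p assume "p \<in> vpairs n"
    obtain a b where p: "p = (a,b)" by force
    have "Lf ((1-t) * (\<theta> a + \<theta> b) + t * (\<eta> a + \<eta> b)) \<le> (1-t) * Lf (\<theta> a + \<theta> b) + t * Lf (\<eta> a + \<eta> b)"
      by (rule Lf_convex[OF assms])
    thus "(case p of (i,j) \<Rightarrow> ((1-t) * (\<theta> i + \<theta> j) + t * (\<eta> i + \<eta> j)) * ind E i j
        - ((1-t) * Lf (\<theta> i + \<theta> j) + t * Lf (\<eta> i + \<eta> j))) \<le>
        (case p of (i,j) \<Rightarrow> ((1-t) * (\<theta> i + \<theta> j) + t * (\<eta> i + \<eta> j)) * ind E i j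
        - Lf ((1-t) * (\<theta> i + \<theta> j) + t * (\<eta> i + \<eta> j)))"
      unfolding p by simp
  qed
  also have "\<dots> = loglik n E (\<lambda>i. (1 - t) * \<theta> i + t * \<eta> i)"
    unfolding loglik_pairs by (intro sum.cong refl) (auto simp: algebra_simps)
  finally show ?thesis .
qed


lemma interior_global:
  assumes "0 < n" "r < n" and th: "\<theta> \<in> boxset n r c d"
    and mx: "\<forall>\<theta>'\<in>boxset n r c d. loglik n E \<theta>' \<le> loglik n E \<theta>"
    and int: "\<forall>i<n. \<bar>\<theta> i - c i\<bar> < d"
    and b: "b \<in> restr_space n r"
  shows "loglik n E b \<le> loglik n E \<theta>"
proof -
  define m where "m = Min ((\<lambda>i. d - \<bar>\<theta> i - c i\<bar>) ` {..<n})"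
  have m0: "m > 0" unfolding m_def using assms(1) int by (subst Min_gr_iff) auto
  have mle: "m \<le> d - \<bar>\<theta> i - c i\<bar>" if "i < n" for i unfolding m_def using that by (intro Min_le) auto
  define M where "M = (\<Sum>i<n. \<bar>b i - \<theta> i\<bar>) + 1"
  have M1: "M \<ge> 1" unfolding M_def by (simp add: sum_nonneg)
  have Mi: "\<bar>b i - \<theta> i\<bar> \<le> M" if "i < n" for i
  proof -
    have "\<bar>b i - \<theta> i\<bar> \<le> (\<Sum>i<n. \<bar>b i - \<theta> i\<bar>)" by (rule member_le_sum) (use that in auto)
    thus ?thesis unfolding M_def by simp
  qed
  define t where "t = min 1 (m / M)"
  have t: "0 < t" "t \<le> 1" using m0 M1 by (auto simp: t_def)
  define \<eta> where "\<eta> = (\<lambda>i. (1 - t) * \<theta> i + t * b i)"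
  have "\<eta> \<in> boxset n r c d"
  proof -
    have "\<eta> \<in> restr_space n r"
    proof -
      have "\<theta> \<in> restr_space n r" using th by (simp add: boxset_def)
      hence r1: "\<theta> i = \<theta> 0" if "i < r" for i
        using that unfolding restr_space_def by blast
      have r1': "\<theta> j = 0" if "j \<ge> n" for j
        using \<open>\<theta> \<in> restr_space n r\<close> that unfolding restr_space_def by blast
      have r2: "b i = b 0" if "i < r" for i
        using b that unfolding restr_space_def by blast
      have r2': "b j = 0" if "j \<ge> n" for j
        using b that unfolding restr_space_def by blast
      have "\<eta> i = \<eta> 0" if "i < r" for i
        unfolding \<eta>_def using r1[OF that] r2[OF that] by (simp only:)
      moreover have "\<eta> j = 0" if "j \<ge> n" for j
        unfolding \<eta>_def using r1'[OF that] r2'[OF that] by simp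
      ultimately show ?thesis unfolding restr_space_def by blast
    qed
    moreover have "\<bar>\<eta> i - c i\<bar> \<le> d" if "i < n" for i
    proof -
      have "\<eta> i - c i = (\<theta> i - c i) + t * (b i - \<theta> i)" by (simp add: \<eta>_def algebra_simps)
      hence "\<bar>\<eta> i - c i\<bar> \<le> \<bar>\<theta> i - c i\<bar> + \<bar>t * (b i - \<theta> i)\<bar>" by (simp only: abs_triangle_ineq)
      also have "\<bar>t * (b i - \<theta> i)\<bar> = t * \<bar>b i - \<theta> i\<bar>" using t by (simp add: abs_mult)
      also have "t * \<bar>b i - \<theta> i\<bar> \<le> (m / M) * M"
        using t Mi[OF that] M1 by (intro mult_mono) (auto simp: t_def)
      also have "(m / M) * M = m" using M1 by simp
      finally show ?thesis using mle[OF that] by simp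
    qed
    ultimately show ?thesis by (auto simp: boxset_def)
  qed
  hence "loglik n E \<eta> \<le> loglik n E \<theta>" using mx by blast
  moreover have "loglik n E \<eta> \<ge> (1 - t) * loglik n E \<theta> + t * loglik n E b"
    unfolding \<eta>_def using t by (intro loglik_concave) auto
  ultimately have "t * loglik n E b \<le> t * loglik n E \<theta>" by (simp add: algebra_simps)
  thus ?thesis using t by simp
qed




lemma cs_sqrt:
  fixes f :: "'a \<Rightarrow> real"
  shows "(\<Sum>i\<in>I. f i) \<le> sqrt (real (card I)) * sqrt (\<Sum>i\<in>I. (f i)^2)"
proof -
  have "(\<Sum>i\<in>I. f i) \<le> sqrt ((\<Sum>i\<in>I. f i)^2)" by simp
  also have "\<dots> \<le> sqrt ((\<Sum>y\<in>I. (f y)\<^sup>2) * card I)"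
    by (rule real_sqrt_le_mono) (rule sum_squared_le_sum_of_squares)
  also have "\<dots> = sqrt (real (card I)) * sqrt (\<Sum>i\<in>I. (f i)^2)"
    by (simp add: real_sqrt_mult)
  finally show ?thesis .
qed

definition gfun :: "real \<Rightarrow> real" where "gfun x = (1 + exp x)^2 / exp x"

lemma vf_gfun: "vf x = 1 / gfun x"
  by (simp add: vf_def gfun_def)

lemma gfun_pos: "gfun x > 0" by (simp add: gfun_def)

lemma finite_offdiag [simp]: "finite (offdiag n)"
proof -
  have "offdiag n \<subseteq> {..<n} \<times> {..<n}" by (auto simp: offdiag_def)
  thus ?thesis by (rule finite_subset) auto
qed

lemma bn_cn_bounds:
  assumes "i < n" "j < n" "i \<noteq> j"
  shows "cn n \<beta> \<le> gfun (\<beta> i + \<beta> j)" "gfun (\<beta> i + \<beta> j) \<le> bn n \<beta>" "0 < cn n \<beta>"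
proof -
  have mem: "gfun (\<beta> i + \<beta> j) \<in> (\<lambda>(i,j). (1 + exp (\<beta> i + \<beta> j))\<^sup>2 / exp (\<beta> i + \<beta> j)) ` offdiag n"
    using assms unfolding gfun_def offdiag_def by (auto intro!: image_eqI[of _ _ "(i,j)"])
  show "cn n \<beta> \<le> gfun (\<beta> i + \<beta> j)" unfolding cn_def using mem by (intro Min_le) auto
  show "gfun (\<beta> i + \<beta> j) \<le> bn n \<beta>" unfolding bn_def using mem by (intro Max_ge) auto
  show "0 < cn n \<beta>" unfolding cn_def using mem
    by (subst Min_gr_iff) (auto simp: add_pos_pos)
qed

lemma vf_bounds:
  assumes "i < n" "j < n" "i \<noteq> j"
  shows "1 / bn n \<beta> \<le> vf (\<beta> i + \<beta> j)" "vf (\<beta> i + \<beta> j) \<le> 1 / cn n \<beta>"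
  using bn_cn_bounds[OF assms, of \<beta>] gfun_pos[of "\<beta> i + \<beta> j"]
  by (auto simp: vf_gfun intro: divide_left_mono)

lemma slope_bounds:
  assumes "\<bar>u\<bar> \<le> 2 * \<delta>" "exp (6 * \<delta>) \<le> 2" "1 / B \<le> vf x" "vf x \<le> 1 / C"
  shows "\<exists>S. pf (x + u) - pf x = u * S \<and> 1 / (2 * B) \<le> S \<and> S \<le> 2 / C"
proof -
  obtain z where z: "\<bar>z - x\<bar> \<le> \<bar>(x + u) - x\<bar>" "pf (x + u) - pf x = ((x + u) - x) * vf z"
    using pf_slope by blast
  have zt: "\<bar>z - x\<bar> \<le> 2 * \<delta>" using z(1) assms(1) by simp
  have lo: "vf x * exp (-3 * (2 * \<delta>)) \<le> vf z" and hi: "vf z \<le> vf x * exp (3 * (2 * \<delta>))"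
    using vf_ratio[OF zt] by auto
  have e1: "exp (- (6 * \<delta>)) \<ge> 1/2"
  proof -
    have "exp (- (6 * \<delta>)) = 1 / exp (6 * \<delta>)" by (simp add: exp_minus field_simps)
    also have "\<dots> \<ge> 1 / 2" using assms(2) by (intro divide_left_mono) auto
    finally show ?thesis .
  qed
  have vx: "vf x > 0" by (rule vf_pos)
  have "vf z \<ge> vf x / 2"
  proof -
    have "vf x / 2 = vf x * (1/2)" by simp
    also have "\<dots> \<le> vf x * exp (- (6 * \<delta>))" using e1 vx by (intro mult_left_mono) auto
    finally show ?thesis using lo by simp
  qed
  moreover have "vf z \<le> 2 * vf x"
  proof -
    have "vf x * exp (6 * \<delta>) \<le> vf x * 2" using assms(2) vx by (intro mult_left_mono) auto
    thus ?thesis using hi by simp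
  qed
  moreover have "1 / (2 * B) \<le> vf x / 2" using assms(3) by simp
  moreover have "2 * vf x \<le> 2 / C" using assms(4) by simp
  ultimately show ?thesis using z(2) by (intro exI[of _ "vf z"]) auto
qed

lemma pair_lower:
  assumes "\<sigma> = 1 \<or> \<sigma> = -1" "\<sigma> * a = \<delta>" "\<bar>b\<bar> \<le> \<delta>" "exp (6 * \<delta>) \<le> 2"
    "1 / B \<le> vf x" "vf x \<le> 1 / C" "C > 0" "B > 0"
  shows "\<sigma> * (pf (x + (a + b)) - pf x) \<ge> \<delta> / (2 * B) - (2 / C) * \<bar>b\<bar>"
proof -
  have d0: "\<delta> \<ge> 0" using assms(3) by linarith
  have aa: "\<bar>a\<bar> = \<delta>" using assms(1) 
  proof
    assume "\<sigma> = 1" thus ?thesis using assms(2) d0 by simp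
  next
    assume "\<sigma> = -1" thus ?thesis using assms(2) d0 by simp
  qed
  have "\<bar>a + b\<bar> \<le> 2 * \<delta>" using aa assms(3) by linarith
  from slope_bounds[OF this assms(4,5,6)] obtain S where
    S: "pf (x + (a + b)) - pf x = (a + b) * S" "1 / (2 * B) \<le> S" "S \<le> 2 / C" by blast
  have S0: "S > 0"
  proof -
    have "1 / (2 * B) > 0" using assms(8) by simp
    thus ?thesis using S(2) by linarith
  qed
  have "\<sigma> * (pf (x + (a + b)) - pf x) = \<delta> * S + (\<sigma> * b) * S"
    using S(1) assms(2) by (simp add: algebra_simps)
  moreover have "\<delta> * S \<ge> \<delta> / (2 * B)"
  proof -
    have "\<delta> \<ge> 0" using assms(3) by linarith
    hence "\<delta> * (1 / (2 * B)) \<le> \<delta> * S" using S(2) by (intro mult_left_mono)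
    thus ?thesis by simp
  qed
  moreover have "(\<sigma> * b) * S \<ge> - ((2 / C) * \<bar>b\<bar>)"
  proof -
    have "\<bar>(\<sigma> * b) * S\<bar> = \<bar>b\<bar> * S" using assms(1) S0 by (auto simp: abs_mult)
    also have "\<dots> \<le> \<bar>b\<bar> * (2 / C)" using S(3) by (intro mult_left_mono) auto
    finally show ?thesis by (simp add: abs_le_iff algebra_simps)
  qed
  ultimately show ?thesis by linarith
qed

lemma pair_sq:
  assumes "\<bar>u\<bar> \<le> 2 * \<delta>" "exp (6 * \<delta>) \<le> 2" "1 / B \<le> vf x" "vf x \<le> 1 / C"
  shows "u * (pf (x + u) - pf x) \<ge> u^2 / (2 * B)"
proof -
  from slope_bounds[OF assms] obtain S where
    S: "pf (x + u) - pf x = u * S" "1 / (2 * B) \<le> S" by blast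
  have "u^2 * (1 / (2 * B)) \<le> u^2 * S" using S(2) by (intro mult_left_mono) auto
  thus ?thesis using S(1) by (simp add: power2_eq_square algebra_simps)
qed




lemma row_lower:
  assumes n: "i < n" and sig: "\<sigma> = 1 \<or> \<sigma> = -1" and hi: "\<sigma> * (\<theta> i - c i) = \<delta>"
    and hb: "\<forall>l<n. \<bar>\<theta> l - c l\<bar> \<le> \<delta>" and de: "exp (6 * \<delta>) \<le> 2"
    and vb: "\<And>l. l < n \<Longrightarrow> l \<noteq> i \<Longrightarrow> 1 / B \<le> vf (c i + c l) \<and> vf (c i + c l) \<le> 1 / C"
    and C: "C > 0" and B: "B > 0"
  shows "\<sigma> * (mu n \<theta> i - mu n c i) \<ge> (real n - 1) * \<delta> / (2 * B) - (2 / C) * (\<Sum>l<n. \<bar>\<theta> l - c l\<bar>)"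
proof -
  have "\<sigma> * (mu n \<theta> i - mu n c i) = (\<Sum>l\<in>{..<n} - {i}. \<sigma> * (pf (c i + c l + ((\<theta> i - c i) + (\<theta> l - c l))) - pf (c i + c l)))"
    unfolding mu_def by (simp add: sum_subtractf[symmetric] sum_distrib_left algebra_simps)
  also have "\<dots> \<ge> (\<Sum>l\<in>{..<n} - {i}. \<delta> / (2 * B) - (2 / C) * \<bar>\<theta> l - c l\<bar>)"
  proof (intro sum_mono)
    fix l assume l: "l \<in> {..<n} - {i}"
    show "\<delta> / (2 * B) - (2 / C) * \<bar>\<theta> l - c l\<bar> \<le> \<sigma> * (pf (c i + c l + ((\<theta> i - c i) + (\<theta> l - c l))) - pf (c i + c l))"
      using l vb[of l] hb C B by (intro pair_lower[OF sig hi _ de]) auto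
  qed
  also have "(\<Sum>l\<in>{..<n} - {i}. \<delta> / (2 * B) - (2 / C) * \<bar>\<theta> l - c l\<bar>)
      = (real n - 1) * \<delta> / (2 * B) - (2 / C) * (\<Sum>l\<in>{..<n} - {i}. \<bar>\<theta> l - c l\<bar>)"
    using n by (simp add: sum_subtractf sum_distrib_left[symmetric] of_nat_diff sum_divide_distrib[symmetric])
  also have "(\<Sum>l\<in>{..<n} - {i}. \<bar>\<theta> l - c l\<bar>) \<le> (\<Sum>l<n. \<bar>\<theta> l - c l\<bar>)"
    by (intro sum_mono2) auto
  hence "(real n - 1) * \<delta> / (2 * B) - (2 / C) * (\<Sum>l\<in>{..<n} - {i}. \<bar>\<theta> l - c l\<bar>)
      \<ge> (real n - 1) * \<delta> / (2 * B) - (2 / C) * (\<Sum>l<n. \<bar>\<theta> l - c l\<bar>)"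
    using C by (intro diff_left_mono mult_left_mono) auto
  finally show ?thesis by simp
qed




lemma sum_pairs_sq:
  fixes h :: "nat \<Rightarrow> real"
  shows "(\<Sum>(i,j)\<in>vpairs n. (h i + h j)^2) = (real n - 2) * (\<Sum>i<n. (h i)^2) + (\<Sum>i<n. h i)^2"
proof -
  have "(\<Sum>(i,j)\<in>vpairs n. (h i + h j)^2) = (\<Sum>(i,j)\<in>vpairs n. (h i + h j) * (h i + h j))"
    by (simp add: power2_eq_square)
  also have "\<dots> = (\<Sum>i<n. h i * (\<Sum>l\<in>{..<n} - {i}. h i + h l))"
    by (rule double_count) simp
  also have "\<dots> = (\<Sum>i<n. h i * ((real n - 2) * h i + (\<Sum>l<n. h l)))"
  proof (intro sum.cong refl)
    fix i assume i: "i \<in> {..<n}"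
    have "(\<Sum>l\<in>{..<n} - {i}. h i + h l) = (real n - 1) * h i + ((\<Sum>l<n. h l) - h i)"
      using i by (simp add: sum.distrib sum_diff1 of_nat_diff)
    also have "(real n - 1) * h i + ((\<Sum>l<n. h l) - h i) = (real n - 2) * h i + (\<Sum>l<n. h l)"
      by (simp add: algebra_simps)
    finally show "h i * (\<Sum>l\<in>{..<n} - {i}. h i + h l) = h i * ((real n - 2) * h i + (\<Sum>l<n. h l))"
      by (simp only:)
  qed
  also have "\<dots> = (\<Sum>i<n. (real n - 2) * (h i)^2 + h i * (\<Sum>l<n. h l))"
    by (intro sum.cong refl) (simp add: algebra_simps power2_eq_square)
  also have "\<dots> = (real n - 2) * (\<Sum>i<n. (h i)^2) + (\<Sum>i<n. h i) * (\<Sum>l<n. h l)"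
    by (simp only: sum.distrib sum_distrib_left[symmetric] sum_distrib_right[symmetric])
  also have "\<dots> = (real n - 2) * (\<Sum>i<n. (h i)^2) + (\<Sum>i<n. h i)^2"
    by (simp add: power2_eq_square)
  finally show ?thesis .
qed

lemma l2_bound:
  assumes n3: "3 \<le> n" and r0: "0 < r" and rn: "r < n" and c: "c \<in> restr_space n r"
    and th: "\<theta> \<in> boxset n r c \<delta>"
    and mx: "\<forall>\<theta>'\<in>boxset n r c \<delta>. loglik n E \<theta>' \<le> loglik n E \<theta>"
    and de: "exp (6 * \<delta>) \<le> 2"
    and vb: "\<And>i j. i < n \<Longrightarrow> j < n \<Longrightarrow> i \<noteq> j \<Longrightarrow> 1 / B \<le> vf (c i + c j) \<and> vf (c i + c j) \<le> 1 / C"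
    and B: "B > 0" and T: "T \<ge> 0"
    and ev1: "\<And>j. r \<le> j \<Longrightarrow> j < n \<Longrightarrow> \<bar>degree n E j - mu n c j\<bar> \<le> T"
    and ev2: "\<bar>\<Sum>i<r. degree n E i - mu n c i\<bar> \<le> sqrt r * T"
  shows "sqrt (\<Sum>i<n. (\<theta> i - c i)^2) \<le> 2 * B * T * sqrt (real n - real r + 1) / (real n - 2)"
proof -
  define h where "h = (\<lambda>i. \<theta> i - c i)"
  define Q where "Q = (\<Sum>i<n. (h i)^2)"
  define e where "e = (\<lambda>i. degree n E i - mu n c i)"
  have thr: "\<theta> \<in> restr_space n r" using th by (simp add: boxset_def)
  have hb: "\<bar>h i\<bar> \<le> \<delta>" if "i < n" for i using th that by (simp add: boxset_def h_def)
  have hr: "h i = h 0" if "i < r" for i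
  proof -
    have "\<theta> i = \<theta> 0" using thr that unfolding restr_space_def by blast
    moreover have "c i = c 0" using c that unfolding restr_space_def by blast
    ultimately show ?thesis by (simp add: h_def)
  qed
  have opt: "0 \<le> (\<Sum>(i,j)\<in>vpairs n. (h i + h j) * (ind E i j - pf (\<theta> i + \<theta> j)))"
  proof (rule opt_dir[of 1])
    fix s :: real assume s: "0 < s" "s \<le> 1"
    have "(\<lambda>i. \<theta> i - s * h i) \<in> boxset n r c \<delta>"
    proof -
      have "(\<lambda>i. \<theta> i - s * h i) = (\<lambda>i. (1 - s) * \<theta> i + s * c i)" by (auto simp: h_def algebra_simps)
      moreover have "(\<lambda>i. (1 - s) * \<theta> i + s * c i) \<in> restr_space n r"
      proof -
        have a: "(1 - s) * \<theta> i + s * c i = (1 - s) * \<theta> 0 + s * c 0" if "i < r" for i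
        proof -
          have "\<theta> i = \<theta> 0" "c i = c 0" using thr c that unfolding restr_space_def by blast+
          thus ?thesis by (simp only:)
        qed
        have b: "(1 - s) * \<theta> i + s * c i = 0" if "i \<ge> n" for i
        proof -
          have "\<theta> i = 0" "c i = 0" using thr c that unfolding restr_space_def by blast+
          thus ?thesis by simp
        qed
        show ?thesis unfolding restr_space_def using a b by blast
      qed
      moreover have "\<bar>(1 - s) * \<theta> i + s * c i - c i\<bar> \<le> \<delta>" if "i < n" for i
      proof -
        have "(1 - s) * \<theta> i + s * c i - c i = (1 - s) * h i" by (simp add: h_def algebra_simps)
        hence "\<bar>(1 - s) * \<theta> i + s * c i - c i\<bar> = (1 - s) * \<bar>h i\<bar>" using s by (simp add: abs_mult)
        also have "\<dots> \<le> 1 * \<delta>" using s hb[OF that] by (intro mult_mono) auto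
        finally show ?thesis by simp
      qed
      ultimately show ?thesis by (simp add: boxset_def)
    qed
    thus "loglik n E (\<lambda>i. \<theta> i - s * h i) \<le> loglik n E \<theta>" using mx by blast
  qed simp
  have res: "(\<Sum>(i,j)\<in>vpairs n. (h i + h j) * (ind E i j - pf (c i + c j))) = (\<Sum>i<n. h i * e i)"
    unfolding e_def by (rule resid_pairs)
  have low: "(\<Sum>(i,j)\<in>vpairs n. (h i + h j)^2 / (2 * B)) \<le>
      (\<Sum>(i,j)\<in>vpairs n. (h i + h j) * (pf (\<theta> i + \<theta> j) - pf (c i + c j)))"
  proof (intro sum_mono)
    fix p assume p: "p \<in> vpairs n"
    obtain i j where ij: "p = (i,j)" by force
    have ij2: "i < n" "j < n" "i \<noteq> j" using p ij by (auto simp: vpairs_def)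
    have "\<bar>h i + h j\<bar> \<le> 2 * \<delta>" using hb[OF ij2(1)] hb[OF ij2(2)] by linarith
    from pair_sq[OF this de, of B "c i + c j" C] vb[OF ij2]
    have "(h i + h j)^2 / (2 * B) \<le> (h i + h j) * (pf (c i + c j + (h i + h j)) - pf (c i + c j))" by auto
    moreover have "c i + c j + (h i + h j) = \<theta> i + \<theta> j" by (simp add: h_def)
    ultimately show "(case p of (i,j) \<Rightarrow> (h i + h j)^2 / (2 * B)) \<le>
        (case p of (i,j) \<Rightarrow> (h i + h j) * (pf (\<theta> i + \<theta> j) - pf (c i + c j)))" by (simp add: ij)
  qed
  have "(\<Sum>(i,j)\<in>vpairs n. (h i + h j) * (pf (\<theta> i + \<theta> j) - pf (c i + c j)))
      = (\<Sum>(i,j)\<in>vpairs n. (h i + h j) * (ind E i j - pf (c i + c j)))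
        - (\<Sum>(i,j)\<in>vpairs n. (h i + h j) * (ind E i j - pf (\<theta> i + \<theta> j)))"
    by (simp add: sum_subtractf[symmetric] case_prod_unfold algebra_simps)
  hence up: "(\<Sum>(i,j)\<in>vpairs n. (h i + h j) * (pf (\<theta> i + \<theta> j) - pf (c i + c j))) \<le> (\<Sum>i<n. h i * e i)"
    using opt res by linarith
  have "(\<Sum>(i,j)\<in>vpairs n. (h i + h j)^2 / (2 * B)) = ((real n - 2) * Q + (\<Sum>i<n. h i)^2) / (2 * B)"
    unfolding Q_def sum_pairs_sq[symmetric] by (simp add: sum_divide_distrib case_prod_unfold)
  also have "\<dots> \<ge> (real n - 2) * Q / (2 * B)"
    using B by (intro divide_right_mono) auto
  finally have A1: "(real n - 2) * Q / (2 * B) \<le> (\<Sum>i<n. h i * e i)" using low up by linarith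
  define g where "g = (\<lambda>k. if k < r then sqrt r * \<bar>h 0\<bar> else \<bar>h k\<bar>)"
  have split: "{..<n} = {..<r} \<union> {r..<n}" using rn by auto
  have "(\<Sum>i<n. h i * e i) = (\<Sum>i<r. h i * e i) + (\<Sum>i\<in>{r..<n}. h i * e i)"
    unfolding split by (rule sum.union_disjoint) auto
  also have "(\<Sum>i<r. h i * e i) = h 0 * (\<Sum>i<r. e i)"
  proof -
    have "(\<Sum>i<r. h i * e i) = (\<Sum>i<r. h 0 * e i)" by (intro sum.cong refl) (metis hr lessThan_iff)
    thus ?thesis by (simp add: sum_distrib_left)
  qed
  also have "\<dots> \<le> \<bar>h 0\<bar> * (sqrt r * T)"
  proof -
    have "h 0 * (\<Sum>i<r. e i) \<le> \<bar>h 0\<bar> * \<bar>\<Sum>i<r. e i\<bar>" by (simp add: abs_mult[symmetric])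
    also have "\<dots> \<le> \<bar>h 0\<bar> * (sqrt r * T)" using ev2 by (intro mult_left_mono) (auto simp: e_def)
    finally show ?thesis .
  qed
  also have "(\<Sum>i\<in>{r..<n}. h i * e i) \<le> (\<Sum>i\<in>{r..<n}. \<bar>h i\<bar> * T)"
  proof (intro sum_mono)
    fix i assume i: "i \<in> {r..<n}"
    have "h i * e i \<le> \<bar>h i\<bar> * \<bar>e i\<bar>" by (simp add: abs_mult[symmetric])
    also have "\<dots> \<le> \<bar>h i\<bar> * T" using ev1[of i] i by (intro mult_left_mono) (auto simp: e_def)
    finally show "h i * e i \<le> \<bar>h i\<bar> * T" .
  qed
  also have "\<bar>h 0\<bar> * (sqrt r * T) + (\<Sum>i\<in>{r..<n}. \<bar>h i\<bar> * T) = T * (\<Sum>k\<in>{r-1..<n}. g k)"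
  proof -
    have iv: "{r-1..<n} = insert (r-1) {r..<n}" using r0 rn by auto
    have "(\<Sum>k\<in>{r-1..<n}. g k) = g (r - 1) + (\<Sum>k\<in>{r..<n}. g k)"
      unfolding iv using r0 by (subst sum.insert) auto
    also have "g (r - 1) = sqrt r * \<bar>h 0\<bar>" using r0 by (simp add: g_def)
    also have "(\<Sum>k\<in>{r..<n}. g k) = (\<Sum>k\<in>{r..<n}. \<bar>h k\<bar>)" by (intro sum.cong) (auto simp: g_def)
    finally show ?thesis by (simp add: algebra_simps sum_distrib_left sum_distrib_right)
  qed
  also have "T * (\<Sum>k\<in>{r-1..<n}. g k) \<le> T * (sqrt (real (card {r-1..<n})) * sqrt (\<Sum>k\<in>{r-1..<n}. (g k)^2))"
    using T by (intro mult_left_mono cs_sqrt) auto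
  also have "card {r-1..<n} = n - r + 1" using r0 rn by simp
  also have "(\<Sum>k\<in>{r-1..<n}. (g k)^2) = Q"
  proof -
    have iv: "{r-1..<n} = insert (r-1) {r..<n}" using r0 rn by auto
    have "(\<Sum>k\<in>{r-1..<n}. (g k)^2) = (g (r - 1))^2 + (\<Sum>k\<in>{r..<n}. (g k)^2)"
      unfolding iv using r0 by (subst sum.insert) auto
    also have "(g (r - 1))^2 = r * (h 0)^2" using r0 by (simp add: g_def power_mult_distrib)
    also have "(\<Sum>k\<in>{r..<n}. (g k)^2) = (\<Sum>k\<in>{r..<n}. (h k)^2)" by (intro sum.cong) (auto simp: g_def)
    also have "r * (h 0)^2 = (\<Sum>i<r. (h i)^2)"
    proof -
      have "(\<Sum>i<r. (h i)^2) = (\<Sum>i<r. (h 0)^2)" by (intro sum.cong refl) (metis hr lessThan_iff)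
      thus ?thesis by simp
    qed
    also have "(\<Sum>i<r. (h i)^2) + (\<Sum>k\<in>{r..<n}. (h k)^2) = Q"
      unfolding Q_def split by (rule sum.union_disjoint[symmetric]) auto
    finally show ?thesis .
  qed
  finally have A2: "(real n - 2) * Q / (2 * B) \<le> T * (sqrt (real (n - r + 1)) * sqrt Q)" using A1 by linarith
  have nr: "real (n - r + 1) = real n - real r + 1" using rn by (simp add: of_nat_diff)
  have Q0: "Q \<ge> 0" unfolding Q_def by (intro sum_nonneg) auto
  have Qe: "(\<Sum>i<n. (\<theta> i - c i)^2) = Q" by (simp add: Q_def h_def)
  have rhs0: "0 \<le> 2 * B * T * sqrt (real n - real r + 1) / (real n - 2)"
    using B T n3 rn by (intro divide_nonneg_nonneg mult_nonneg_nonneg) auto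
  show ?thesis
  proof (cases "Q = 0")
    case True thus ?thesis using rhs0 Qe by simp
  next
    case False
    hence sq: "sqrt Q > 0" using Q0 by simp
    have qq: "sqrt Q * sqrt Q = Q" using Q0 by simp
    have "(real n - 2) * (sqrt Q * sqrt Q) / (2 * B) \<le> T * sqrt (real n - real r + 1) * sqrt Q"
      using A2 unfolding qq nr by (simp only: mult.assoc)
    moreover have "(real n - 2) * sqrt Q / (2 * B) * sqrt Q = (real n - 2) * (sqrt Q * sqrt Q) / (2 * B)"
      by (simp only: times_divide_eq_left mult.assoc)
    ultimately have "(real n - 2) * sqrt Q / (2 * B) * sqrt Q \<le> (T * sqrt (real n - real r + 1)) * sqrt Q"
      by linarith
    from this sq have "(real n - 2) * sqrt Q / (2 * B) \<le> T * sqrt (real n - real r + 1)"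
      by (rule mult_right_le_imp_le)
    hence "sqrt Q \<le> T * sqrt (real n - real r + 1) * (2 * B) / (real n - 2)"
      using B n3 by (simp add: field_simps)
    thus ?thesis using Qe by (simp add: algebra_simps)
  qed
qed




lemma deterministic:
  fixes n r :: nat and \<beta> :: "nat \<Rightarrow> real" and E and \<delta> :: real
  assumes n4: "4 \<le> n" and r0: "0 < r" and rn: "r < n" and \<beta>r: "\<forall>i<r. \<beta> i = \<beta> 0"
    and \<delta>0: "0 < \<delta>" and de: "exp (6 * \<delta>) \<le> 2"
    and ev1: "\<forall>j. r \<le> j \<and> j < n \<longrightarrow> \<bar>degree n E j - mu n \<beta> j\<bar> \<le> sqrt (real n * ln (real n))"
    and ev2: "\<bar>\<Sum>i<r. degree n E i - mu n \<beta> i\<bar> \<le> sqrt (2 * real r * real n * ln (real n))"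
    and big: "2 * bn n \<beta> / (real n - 1) * (sqrt (2 * real n * ln (real n)) + (2 / cn n \<beta>) * sqrt (real n) *
        (2 * bn n \<beta> * sqrt (2 * real n * ln (real n)) * sqrt (real n - real r + 1) / (real n - 2))) < \<delta>"
  shows "\<exists>b. is_restr_mle n r E b \<and> sup_dist n b \<beta> \<le> \<delta>"
proof -
  define B where "B = bn n \<beta>"
  define C where "C = cn n \<beta>"
  define T where "T = sqrt (2 * real n * ln (real n))"
  define c where "c = (\<lambda>i. if i < n then \<beta> i else 0)"
  have n0: "0 < n" using rn by simp
  have cr: "c \<in> restr_space n r"
  proof -
    have "c i = c 0" if "i < r" for i
    proof -
      have "\<beta> i = \<beta> 0" using \<beta>r that by blast
      thus ?thesis using that rn n0 by (simp add: c_def)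
    qed
    moreover have "c i = 0" if "i \<ge> n" for i using that by (simp add: c_def)
    ultimately show ?thesis unfolding restr_space_def by blast
  qed
  have muc: "mu n c i = mu n \<beta> i" if "i < n" for i
    unfolding mu_def using that by (intro sum.cong refl) (auto simp: c_def)
  have vb: "1 / B \<le> vf (c i + c j) \<and> vf (c i + c j) \<le> 1 / C" if "i < n" "j < n" "i \<noteq> j" for i j
    using vf_bounds[OF that, of \<beta>] that by (simp add: c_def B_def C_def)
  have C0: "C > 0" using bn_cn_bounds(3)[of 0 n 1 \<beta>] n4 by (simp add: C_def)
  have B0: "B > 0"
    using bn_cn_bounds(2)[of 0 n 1 \<beta>] gfun_pos[of "\<beta> 0 + \<beta> 1"] n4 by (simp add: B_def)
  have lnn: "ln (real n) \<ge> 0" using n4 by simp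
  have T0: "T \<ge> 0" unfolding T_def using lnn by simp
  have ev1': "\<bar>degree n E j - mu n c j\<bar> \<le> T" if "r \<le> j" "j < n" for j
  proof -
    have "sqrt (real n * ln (real n)) \<le> T" unfolding T_def using lnn by simp
    thus ?thesis using ev1 that muc[of j] by auto
  qed
  have ev2': "\<bar>\<Sum>i<r. degree n E i - mu n c i\<bar> \<le> sqrt r * T"
  proof -
    have "(\<Sum>i<r. degree n E i - mu n c i) = (\<Sum>i<r. degree n E i - mu n \<beta> i)"
      using rn by (intro sum.cong refl) (auto simp: muc)
    moreover have "sqrt (2 * real r * real n * ln (real n)) = sqrt r * T"
      unfolding T_def by (simp add: real_sqrt_mult[symmetric] algebra_simps)
    ultimately show ?thesis using ev2 by simp
  qed
  obtain \<theta> where th: "\<theta> \<in> boxset n r c \<delta>" and mx: "\<forall>\<theta>'\<in>boxset n r c \<delta>. loglik n E \<theta>' \<le> loglik n E \<theta>"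
    using box_max_exists[OF r0 rn cr, of \<delta> E] \<delta>0 by auto
  define h where "h = (\<lambda>i. \<theta> i - c i)"
  have thr: "\<theta> \<in> restr_space n r" using th by (simp add: boxset_def)
  have hb: "\<bar>h i\<bar> \<le> \<delta>" if "i < n" for i using th that by (simp add: boxset_def h_def)
  have th0: "\<theta> i = \<theta> 0" if "i < r" for i using thr that unfolding restr_space_def by blast
  have thn: "\<theta> i = 0" if "i \<ge> n" for i using thr that unfolding restr_space_def by blast
  have c0: "c i = c 0" if "i < r" for i using cr that unfolding restr_space_def by blast
  have hr: "h i = h 0" if "i < r" for i unfolding h_def using th0[OF that] c0[OF that] by simp
  define Q where "Q = (\<Sum>i<n. (h i)^2)"
  have l2: "sqrt Q \<le> 2 * B * T * sqrt (real n - real r + 1) / (real n - 2)"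
    unfolding Q_def h_def
    by (rule l2_bound[OF _ r0 rn cr th mx de vb B0 T0 ev1' ev2']) (use n4 in auto)
  define A where "A = (\<Sum>l<n. \<bar>h l\<bar>)"
  have AQ: "A \<le> sqrt (real n) * sqrt Q"
    using cs_sqrt[of "\<lambda>l. \<bar>h l\<bar>" "{..<n}"] by (simp add: A_def Q_def)
  define LB where "LB = (real n - 1) * \<delta> / (2 * B) - (2 / C) * A"
  have int: "\<forall>i<n. \<bar>h i\<bar> < \<delta>"
  proof (rule ccontr)
    assume "\<not> (\<forall>i<n. \<bar>h i\<bar> < \<delta>)"
    then obtain k where k: "k < n" "\<bar>h k\<bar> = \<delta>" using hb by force
    define \<sigma> where "\<sigma> = (if h k \<ge> 0 then 1 else (-1::real))"
    have sig: "\<sigma> = 1 \<or> \<sigma> = -1" by (simp add: \<sigma>_def)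
    have sk: "\<sigma> * h k = \<delta>" using k by (auto simp: \<sigma>_def)
    have rowl: "\<sigma> * (mu n \<theta> i - mu n c i) \<ge> LB" if "i < n" "\<sigma> * h i = \<delta>" for i
      unfolding LB_def A_def h_def
      by (rule row_lower[OF that(1) sig]) (use that hb vb C0 B0 de in \<open>auto simp: h_def\<close>)
    have key: "LB \<le> T"
    proof (cases "k < r")
      case True
      define w where "w = (\<lambda>i. if i < r then \<sigma> else 0)"
      have opt: "0 \<le> (\<Sum>(i,j)\<in>vpairs n. (w i + w j) * (ind E i j - pf (\<theta> i + \<theta> j)))"
      proof (rule opt_dir[of "2 * \<delta>"])
        fix s :: real assume s: "0 < s" "s \<le> 2 * \<delta>"
        have "(\<lambda>i. \<theta> i - s * w i) \<in> boxset n r c \<delta>"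
        proof -
          have "\<theta> i - s * w i = \<theta> 0 - s * w 0" if "i < r" for i
            using th0[OF that] that r0 by (simp add: w_def)
          moreover have "\<theta> i - s * w i = 0" if "i \<ge> n" for i
            using thn[OF that] that rn by (simp add: w_def)
          moreover have "\<bar>\<theta> i - s * w i - c i\<bar> \<le> \<delta>" if "i < n" for i
          proof (cases "i < r")
            case True
            have "h i = h k" using hr[OF True] hr[OF \<open>k < r\<close>] by simp
            hence "\<sigma> * (\<theta> i - s * w i - c i) = \<delta> - s" using sk True sig by (auto simp: w_def h_def algebra_simps)
            moreover have "\<bar>\<sigma> * (\<theta> i - s * w i - c i)\<bar> = \<bar>\<theta> i - s * w i - c i\<bar>" using sig by (auto simp: abs_mult)
            ultimately show ?thesis using s by auto
          next
            case False thus ?thesis using hb[OF that] by (simp add: w_def h_def)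
          qed
          ultimately show ?thesis unfolding boxset_def restr_space_def by blast
        qed
        thus "loglik n E (\<lambda>i. \<theta> i - s * w i) \<le> loglik n E \<theta>" using mx by blast
      qed (use \<delta>0 in simp)
      also have "(\<Sum>(i,j)\<in>vpairs n. (w i + w j) * (ind E i j - pf (\<theta> i + \<theta> j)))
          = (\<Sum>i<n. w i * (degree n E i - mu n \<theta> i))" by (rule resid_pairs)
      also have "\<dots> = \<sigma> * (\<Sum>i<r. degree n E i - mu n \<theta> i)"
      proof -
        have "(\<Sum>i<n. w i * (degree n E i - mu n \<theta> i)) = (\<Sum>i<n. if i \<in> {..<r} then \<sigma> * (degree n E i - mu n \<theta> i) else 0)"
          by (intro sum.cong refl) (simp add: w_def)
        also have "\<dots> = (\<Sum>i\<in>{..<n} \<inter> {..<r}. \<sigma> * (degree n E i - mu n \<theta> i))"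
          by (rule sum.inter_restrict[symmetric]) simp
        also have "{..<n} \<inter> {..<r} = {..<r}" using rn by auto
        finally show ?thesis by (simp add: sum_distrib_left)
      qed
      finally have o2: "0 \<le> \<sigma> * (\<Sum>i<r. degree n E i - mu n \<theta> i)" .
      have "real r * LB \<le> (\<Sum>i<r. \<sigma> * (mu n \<theta> i - mu n c i))"
      proof -
        have "(\<Sum>i<r. LB) \<le> (\<Sum>i<r. \<sigma> * (mu n \<theta> i - mu n c i))"
        proof (intro sum_mono)
          fix i assume i: "i \<in> {..<r}"
          have "h i = h k" using hr[of i] hr[OF \<open>k < r\<close>] i by simp
          thus "LB \<le> \<sigma> * (mu n \<theta> i - mu n c i)" using rowl[of i] i rn sk by auto
        qed
        thus ?thesis by simp
      qed
      also have "(\<Sum>i<r. \<sigma> * (mu n \<theta> i - mu n c i)) =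
          \<sigma> * (\<Sum>i<r. degree n E i - mu n c i) - \<sigma> * (\<Sum>i<r. degree n E i - mu n \<theta> i)"
      proof -
        have "(\<Sum>i<r. \<sigma> * (mu n \<theta> i - mu n c i)) =
          (\<Sum>i<r. \<sigma> * (degree n E i - mu n c i) - \<sigma> * (degree n E i - mu n \<theta> i))"
          by (intro sum.cong refl) (simp add: algebra_simps)
        also have "\<dots> = (\<Sum>i<r. \<sigma> * (degree n E i - mu n c i)) - (\<Sum>i<r. \<sigma> * (degree n E i - mu n \<theta> i))"
          by (rule sum_subtractf)
        also have "\<dots> = \<sigma> * (\<Sum>i<r. degree n E i - mu n c i) - \<sigma> * (\<Sum>i<r. degree n E i - mu n \<theta> i)"
          by (simp only: sum_distrib_left)
        finally show ?thesis .
      qed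
      also have "\<dots> \<le> \<bar>\<Sum>i<r. degree n E i - mu n c i\<bar>"
      proof -
        have "\<sigma> * (\<Sum>i<r. degree n E i - mu n c i) \<le> \<bar>\<Sum>i<r. degree n E i - mu n c i\<bar>"
          using sig by (auto simp: abs_if)
        thus ?thesis using o2 by linarith
      qed
      also have "\<dots> \<le> sqrt r * T" by (rule ev2')
      finally have rl: "real r * LB \<le> sqrt r * T" .
      show "LB \<le> T"
      proof (cases "LB \<le> 0")
        case True thus ?thesis using T0 by linarith
      next
        case False
        have "sqrt r \<le> real r"
        proof -
          have "1 \<le> real r" using r0 by simp
          hence "1 \<le> sqrt (real r)" by simp
          hence "sqrt (real r) * 1 \<le> sqrt (real r) * sqrt (real r)" by (intro mult_left_mono) auto
          thus ?thesis by simp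
        qed
        hence "sqrt r * LB \<le> real r * LB" using False by (intro mult_right_mono) auto
        hence "sqrt r * LB \<le> sqrt r * T" using rl by linarith
        moreover have "sqrt r > 0" using r0 by simp
        ultimately show ?thesis by simp
      qed
    next
      case False
      define w where "w = (\<lambda>i. if i = k then \<sigma> else 0)"
      have opt: "0 \<le> (\<Sum>(i,j)\<in>vpairs n. (w i + w j) * (ind E i j - pf (\<theta> i + \<theta> j)))"
      proof (rule opt_dir[of "2 * \<delta>"])
        fix s :: real assume s: "0 < s" "s \<le> 2 * \<delta>"
        have "(\<lambda>i. \<theta> i - s * w i) \<in> boxset n r c \<delta>"
        proof -
          have "\<theta> i - s * w i = \<theta> 0 - s * w 0" if "i < r" for i
            using th0[OF that] that r0 False by (simp add: w_def)
          moreover have "\<theta> i - s * w i = 0" if "i \<ge> n" for i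
            using thn[OF that] that k by (simp add: w_def)
          moreover have "\<bar>\<theta> i - s * w i - c i\<bar> \<le> \<delta>" if "i < n" for i
          proof (cases "i = k")
            case True
            hence "\<sigma> * (\<theta> i - s * w i - c i) = \<delta> - s" using sk sig by (auto simp: w_def h_def algebra_simps)
            moreover have "\<bar>\<sigma> * (\<theta> i - s * w i - c i)\<bar> = \<bar>\<theta> i - s * w i - c i\<bar>" using sig by (auto simp: abs_mult)
            ultimately show ?thesis using s by auto
          next
            case False thus ?thesis using hb[OF that] by (simp add: w_def h_def)
          qed
          ultimately show ?thesis unfolding boxset_def restr_space_def by blast
        qed
        thus "loglik n E (\<lambda>i. \<theta> i - s * w i) \<le> loglik n E \<theta>" using mx by blast
      qed (use \<delta>0 in simp)
      also have "(\<Sum>(i,j)\<in>vpairs n. (w i + w j) * (ind E i j - pf (\<theta> i + \<theta> j)))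
          = (\<Sum>i<n. w i * (degree n E i - mu n \<theta> i))" by (rule resid_pairs)
      also have "\<dots> = \<sigma> * (degree n E k - mu n \<theta> k)"
      proof -
        have "(\<Sum>i<n. w i * (degree n E i - mu n \<theta> i)) = (\<Sum>i<n. if i = k then \<sigma> * (degree n E i - mu n \<theta> i) else 0)"
          by (intro sum.cong refl) (simp add: w_def)
        also have "\<dots> = \<sigma> * (degree n E k - mu n \<theta> k)" using k by (simp add: sum.delta)
        finally show ?thesis .
      qed
      finally have o2: "0 \<le> \<sigma> * (degree n E k - mu n \<theta> k)" .
      have "LB \<le> \<sigma> * (mu n \<theta> k - mu n c k)" by (rule rowl[OF k(1) sk])
      also have "\<dots> = \<sigma> * (degree n E k - mu n c k) - \<sigma> * (degree n E k - mu n \<theta> k)"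
        by (simp add: algebra_simps)
      also have "\<dots> \<le> \<bar>degree n E k - mu n c k\<bar>"
      proof -
        have "\<sigma> * (degree n E k - mu n c k) \<le> \<bar>degree n E k - mu n c k\<bar>"
          using sig by (auto simp: abs_if)
        thus ?thesis using o2 by linarith
      qed
      also have "\<dots> \<le> T" using ev1'[of k] False k by simp
      finally show "LB \<le> T" .
    qed
    define R where "R = 2 * B * T * sqrt (real n - real r + 1) / (real n - 2)"
    have s1: "(real n - 1) * \<delta> / (2 * B) \<le> T + (2 / C) * A" using key unfolding LB_def by linarith
    have "sqrt (real n) * sqrt Q \<le> sqrt (real n) * R" using l2 unfolding R_def by (intro mult_left_mono) auto
    hence "A \<le> sqrt (real n) * R" using AQ by linarith
    hence "(2 / C) * A \<le> (2 / C) * (sqrt (real n) * R)" using C0 by (intro mult_left_mono) auto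
    hence s2: "(real n - 1) * \<delta> / (2 * B) \<le> T + (2 / C) * (sqrt (real n) * R)" using s1 by linarith
    have "2 * B / (real n - 1) * ((real n - 1) * \<delta> / (2 * B)) = \<delta>" using B0 n4 by (simp add: field_simps)
    moreover have "2 * B / (real n - 1) * ((real n - 1) * \<delta> / (2 * B)) \<le> 2 * B / (real n - 1) * (T + (2 / C) * (sqrt (real n) * R))"
      using s2 B0 n4 by (intro mult_left_mono) auto
    ultimately have s3: "\<delta> \<le> 2 * B / (real n - 1) * (T + (2 / C) * (sqrt (real n) * R))" by simp
    have "2 * B / (real n - 1) * (T + (2 / C) * (sqrt (real n) * R)) =
       2 * bn n \<beta> / (real n - 1) * (sqrt (2 * real n * ln (real n)) + (2 / cn n \<beta>) * sqrt (real n) *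
        (2 * bn n \<beta> * sqrt (2 * real n * ln (real n)) * sqrt (real n - real r + 1) / (real n - 2)))"
      unfolding R_def B_def C_def T_def by (simp only: mult.assoc)
    thus False using big s3 by linarith
  qed
  have mle: "is_restr_mle n r E \<theta>"
    unfolding is_restr_mle_def
  proof (intro conjI ballI)
    show "\<theta> \<in> restr_space n r" by (rule thr)
    fix b' assume "b' \<in> restr_space n r"
    thus "loglik n E b' \<le> loglik n E \<theta>"
      by (intro interior_global[OF n0 rn th mx]) (use int in \<open>auto simp: h_def\<close>)
  qed
  have "sup_dist n \<theta> \<beta> \<le> \<delta>"
    unfolding sup_dist_def using n0 hb by (subst Max_le_iff) (auto simp: h_def c_def)
  with mle show ?thesis by blast
qed




lemma lin_stat_resid:
  "lin_stat n \<beta> (\<lambda>i j. w i + w j) E = (\<Sum>i<n. w i * (degree n E i - mu n \<beta> i))"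
  unfolding lin_stat_def edge_prob_pf by (rule resid_pairs)

lemma exp_m2ln: assumes "n \<ge> 2" shows "exp (- 2 * ln (real n)) = 1 / (real n)^2"
proof -
  have "exp (- 2 * ln (real n)) = 1 / exp (2 * ln (real n))" by (simp add: exp_minus field_simps)
  also have "exp (2 * ln (real n)) = (exp (ln (real n)))^2"
    using exp_of_nat_mult[of 2 "ln (real n)"] by simp
  also have "exp (ln (real n)) = real n" using assms by simp
  finally show ?thesis .
qed

lemma prob_single:
  assumes "n \<ge> 2" "j < n"
  shows "beta_prob n \<beta> (\<lambda>E. \<bar>degree n E j - mu n \<beta> j\<bar> > sqrt (real n * ln (real n))) \<le> 2 / (real n)^2"
proof -
  define w where "w = (\<lambda>i. if i = j then 1 else (0::real))"
  have eq: "lin_stat n \<beta> (\<lambda>i l. w i + w l) E = degree n E j - mu n \<beta> j" for E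
  proof -
    have "lin_stat n \<beta> (\<lambda>i l. w i + w l) E = (\<Sum>i<n. if i = j then degree n E i - mu n \<beta> i else 0)"
      unfolding lin_stat_resid by (intro sum.cong refl) (simp add: w_def)
    also have "\<dots> = degree n E j - mu n \<beta> j" using assms by (simp add: sum.delta)
    finally show ?thesis .
  qed
  have V: "(\<Sum>(i,l)\<in>vpairs n. (w i + w l)^2) \<le> real n"
  proof -
    have "(\<Sum>i<n. (w i)^2) = (\<Sum>i<n. if i = j then 1 else 0)" by (intro sum.cong refl) (simp add: w_def)
    hence "(\<Sum>i<n. (w i)^2) = 1" "(\<Sum>i<n. w i) = 1" using assms by (simp_all add: w_def sum.delta)
    hence "(\<Sum>(i,l)\<in>vpairs n. (w i + w l)^2) = real n - 1" by (simp add: sum_pairs_sq)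
    thus ?thesis by simp
  qed
  have ln0: "ln (real n) > 0" using assms by simp
  have "beta_prob n \<beta> (\<lambda>E. \<bar>degree n E j - mu n \<beta> j\<bar> > sqrt (real n * ln (real n)))
     = beta_prob n \<beta> (\<lambda>E. \<bar>lin_stat n \<beta> (\<lambda>i l. w i + w l) E\<bar> > sqrt (real n * ln (real n)))"
    by (simp add: eq)
  also have "\<dots> \<le> 2 * exp (- 2 * (sqrt (real n * ln (real n)))^2 / real n)"
    by (rule hoeffding_abs[OF _ V]) (use assms ln0 in auto)
  also have "(sqrt (real n * ln (real n)))^2 = real n * ln (real n)" using ln0 by simp
  also have "- 2 * (real n * ln (real n)) / real n = - 2 * ln (real n)" using assms by simp
  also have "exp (- 2 * ln (real n)) = 1 / (real n)^2" using assms(1) by (rule exp_m2ln)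
  finally show ?thesis by simp
qed

lemma prob_group:
  assumes "n \<ge> 2" "0 < r" "r < n"
  shows "beta_prob n \<beta> (\<lambda>E. \<bar>\<Sum>i<r. degree n E i - mu n \<beta> i\<bar> > sqrt (2 * real r * real n * ln (real n)))
     \<le> 2 / (real n)^2"
proof -
  define w where "w = (\<lambda>i. if i < r then 1 else (0::real))"
  have eq: "lin_stat n \<beta> (\<lambda>i l. w i + w l) E = (\<Sum>i<r. degree n E i - mu n \<beta> i)" for E
  proof -
    have "lin_stat n \<beta> (\<lambda>i l. w i + w l) E = (\<Sum>i<n. if i \<in> {..<r} then degree n E i - mu n \<beta> i else 0)"
      unfolding lin_stat_resid by (intro sum.cong refl) (simp add: w_def)
    also have "\<dots> = (\<Sum>i\<in>{..<n} \<inter> {..<r}. degree n E i - mu n \<beta> i)"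
      by (rule sum.inter_restrict[symmetric]) simp
    also have "{..<n} \<inter> {..<r} = {..<r}" using assms by auto
    finally show ?thesis .
  qed
  have V: "(\<Sum>(i,l)\<in>vpairs n. (w i + w l)^2) \<le> 2 * real r * real n"
  proof -
    have s: "(\<Sum>i<n. f i) = (\<Sum>i\<in>{..<n} \<inter> {..<r}. f i)" if "\<And>i. i \<ge> r \<Longrightarrow> f i = 0" for f :: "nat \<Rightarrow> real"
    proof (rule sum.mono_neutral_right)
      show "\<forall>i\<in>{..<n} - {..<n} \<inter> {..<r}. f i = 0"
      proof
        fix i assume "i \<in> {..<n} - {..<n} \<inter> {..<r}"
        hence "r \<le> i" by auto
        thus "f i = 0" by (rule that)
      qed
    qed auto
    have "{..<n} \<inter> {..<r} = {..<r}" using assms by auto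
    hence "(\<Sum>i<n. (w i)^2) = real r" "(\<Sum>i<n. w i) = real r"
      using s[of "\<lambda>i. (w i)^2"] s[of w] by (auto simp: w_def)
    hence "(\<Sum>(i,l)\<in>vpairs n. (w i + w l)^2) = (real n - 2) * real r + (real r)^2" by (simp add: sum_pairs_sq)
    also have "\<dots> \<le> 2 * real r * real n"
    proof -
      have "real r * real r \<le> real n * real r" using assms by (intro mult_right_mono) auto
      thus ?thesis by (simp add: power2_eq_square algebra_simps)
    qed
    finally show ?thesis .
  qed
  have ln0: "ln (real n) > 0" using assms by simp
  have "beta_prob n \<beta> (\<lambda>E. \<bar>\<Sum>i<r. degree n E i - mu n \<beta> i\<bar> > sqrt (2 * real r * real n * ln (real n)))
     = beta_prob n \<beta> (\<lambda>E. \<bar>lin_stat n \<beta> (\<lambda>i l. w i + w l) E\<bar> > sqrt (2 * real r * real n * ln (real n)))"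
    by (simp add: eq)
  also have "\<dots> \<le> 2 * exp (- 2 * (sqrt (2 * real r * real n * ln (real n)))^2 / (2 * real r * real n))"
    by (rule hoeffding_abs[OF _ V]) (use assms ln0 in auto)
  also have "(sqrt (2 * real r * real n * ln (real n)))^2 = 2 * real r * real n * ln (real n)" using ln0 by simp
  also have "- 2 * (2 * real r * real n * ln (real n)) / (2 * real r * real n) = - 2 * ln (real n)" using assms by simp
  also have "exp (- 2 * ln (real n)) = 1 / (real n)^2" using assms(1) by (rule exp_m2ln)
  finally show ?thesis by simp
qed

definition good :: "nat \<Rightarrow> nat \<Rightarrow> (nat \<Rightarrow> real) \<Rightarrow> (nat \<times> nat) set \<Rightarrow> bool" where
  "good n r \<beta> E \<longleftrightarrow> (\<forall>j. r \<le> j \<and> j < n \<longrightarrow> \<bar>degree n E j - mu n \<beta> j\<bar> \<le> sqrt (real n * ln (real n))) \<and>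
     \<bar>\<Sum>i<r. degree n E i - mu n \<beta> i\<bar> \<le> sqrt (2 * real r * real n * ln (real n))"

lemma prob_good:
  assumes "n \<ge> 2" "0 < r" "r < n"
  shows "beta_prob n \<beta> (good n r \<beta>) \<ge> 1 - 2 * (real n - real r + 1) / (real n)^2"
proof -
  define Q where "Q = (\<lambda>k E. if k = n then \<bar>\<Sum>i<r. degree n E i - mu n \<beta> i\<bar> > sqrt (2 * real r * real n * ln (real n))
      else \<bar>degree n E k - mu n \<beta> k\<bar> > sqrt (real n * ln (real n)))"
  define K where "K = insert n {r..<n}"
  have bad: "beta_prob n \<beta> (\<lambda>E. \<not> good n r \<beta> E) \<le> beta_prob n \<beta> (\<lambda>E. \<exists>k\<in>K. Q k E)"
    by (intro bp_mono) (auto simp: good_def Q_def K_def not_le)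
  also have "\<dots> \<le> (\<Sum>k\<in>K. beta_prob n \<beta> (Q k))" by (rule bp_union) (simp add: K_def)
  also have "\<dots> \<le> (\<Sum>k\<in>K. 2 / (real n)^2)"
  proof (intro sum_mono)
    fix k assume k: "k \<in> K"
    show "beta_prob n \<beta> (Q k) \<le> 2 / (real n)^2"
    proof (cases "k = n")
      case True thus ?thesis using prob_group[OF assms, of \<beta>] by (simp add: Q_def)
    next
      case False
      hence "k < n" using k by (auto simp: K_def)
      thus ?thesis using prob_single[OF assms(1) \<open>k < n\<close>, of \<beta>] False by (simp add: Q_def)
    qed
  qed
  also have "\<dots> = 2 * (real n - real r + 1) / (real n)^2"
  proof -
    have "card K = n - r + 1" using assms by (simp add: K_def)
    hence "real (card K) = real n - real r + 1" using assms by (simp add: of_nat_diff)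
    thus ?thesis by simp
  qed
  finally show ?thesis using bp_compl[of n \<beta> "good n r \<beta>"] by simp
qed




lemma big_ineq:
  fixes n r :: nat and B C :: real
  assumes n4: "4 \<le> n" and r1: "1 \<le> r" and rn: "r < n" and C0: "0 < C" and CB: "C \<le> B"
  shows "2 * B / (real n - 1) * (sqrt (2 * real n * ln (real n)) + (2 / C) * sqrt (real n) *
        (2 * B * sqrt (2 * real n * ln (real n)) * sqrt (real n - real r + 1) / (real n - 2)))
     < 100 * (B + B^3 / C^2 * (sqrt (real r) * sqrt (real n - real r) / (real n) powr (3/2)
        + (real n - real r) / real n)) * sqrt (ln (real n) / real n)"
proof -
  define \<rho> where "\<rho> = sqrt (ln (real n) / real n)"
  define T where "T = sqrt (2 * real n * ln (real n))"
  define R where "R = B + B^3 / C^2 * (sqrt (real r) * sqrt (real n - real r) / (real n) powr (3/2)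
        + (real n - real r) / real n)"
  define y where "y = sqrt ((real n - real r) / real n)"
  define s1 where "s1 = sqrt (real n - real r + 1)"
  have B0: "B > 0" using C0 CB by linarith
  have n0: "real n > 0" using n4 by simp
  have ln0: "ln (real n) > 0" using n4 by simp
  have \<rho>0: "\<rho> > 0" unfolding \<rho>_def using ln0 n0 by simp
  have Teq: "T = sqrt 2 * real n * \<rho>"
  proof -
    have "2 * real n * ln (real n) = 2 * (real n)^2 * (ln (real n) / real n)"
      using n0 by (simp add: power2_eq_square field_simps)
    hence "T = sqrt (2 * (real n)^2 * (ln (real n) / real n))" unfolding T_def by (simp only:)
    also have "\<dots> = sqrt (2 * (real n)^2) * \<rho>" unfolding \<rho>_def by (rule real_sqrt_mult)
    also have "sqrt (2 * (real n)^2) = sqrt 2 * real n" by (simp add: real_sqrt_mult)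
    finally show ?thesis .
  qed
  have y0: "y \<ge> 0" unfolding y_def using rn by simp
  have y2: "y^2 = (real n - real r) / real n" unfolding y_def using rn by simp
  have s1le: "s1 \<le> sqrt 2 * sqrt (real n) * y"
  proof -
    have e: "2 * real n * ((real n - real r) / real n) = 2 * (real n - real r)" using n0 by simp
    have "r + 1 \<le> n" using rn by simp
    hence "real (r + 1) \<le> real n" by (simp only: of_nat_le_iff)
    hence "real r + 1 \<le> real n" by simp
    hence "real n - real r + 1 \<le> 2 * (real n - real r)" by (simp add: algebra_simps)
    have "real n - real r + 1 \<le> 2 * real n * ((real n - real r) / real n)" unfolding e using \<open>real n - real r + 1 \<le> 2 * (real n - real r)\<close> .
    hence "s1 \<le> sqrt (2 * real n * ((real n - real r) / real n))" unfolding s1_def by (rule real_sqrt_le_mono)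
    also have "\<dots> = sqrt 2 * sqrt (real n) * y" unfolding y_def by (simp only: real_sqrt_mult)
    finally show ?thesis .
  qed
  have Rge: "R \<ge> B + B^3 / C^2 * y^2"
  proof -
    have "0 \<le> sqrt (real r) * sqrt (real n - real r) / (real n) powr (3/2)" using rn by simp
    moreover have "0 \<le> B^3 / C^2" using B0 C0 by simp
    ultimately have "B^3 / C^2 * y^2 \<le> B^3 / C^2 * (sqrt (real r) * sqrt (real n - real r) / (real n) powr (3/2) + y^2)"
      by (intro mult_left_mono) auto
    thus ?thesis unfolding R_def y2 by simp
  qed
  have am: "2 * (B^2 / C) * y \<le> B + B^3 / C^2 * y^2"
  proof -
    have "0 \<le> B * (1 - B * y / C)^2" using B0 by simp
    also have "B * (1 - B * y / C)^2 = B + B^3 / C^2 * y^2 - 2 * (B^2 / C) * y"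
      using C0 by (simp add: power2_eq_square power3_eq_cube field_simps)
    finally show ?thesis by simp
  qed
  have BR: "B \<le> R" using Rge B0 C0 by (smt (verit) zero_le_power2 divide_nonneg_pos zero_less_power mult_nonneg_nonneg)
  have BCy: "(B^2 / C) * y \<le> R / 2" using am Rge by linarith
  have t1: "2 * B / (real n - 1) * T \<le> 4 * R * \<rho>"
  proof -
    have nn: "real n / (real n - 1) \<le> 4 / 3" using n4 by (simp add: field_simps)
    have sq2: "sqrt 2 \<le> (3/2 :: real)"
      by (rule real_le_lsqrt) (auto simp: power2_eq_square)
    have "2 * B / (real n - 1) * T = 2 * B * sqrt 2 * \<rho> * (real n / (real n - 1))"
      unfolding Teq using n4 by (simp add: field_simps)
    also have "\<dots> \<le> 2 * B * (3/2) * \<rho> * (4/3)"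
      using B0 \<rho>0 sq2 nn n4 by (intro mult_mono) auto
    also have "\<dots> = 4 * B * \<rho>" by simp
    also have "\<dots> \<le> 4 * R * \<rho>" using BR \<rho>0 by simp
    finally show ?thesis .
  qed
  have t2: "2 * B / (real n - 1) * ((2 / C) * sqrt (real n) * (2 * B * T * s1 / (real n - 2))) \<le> 24 * R * \<rho>"
  proof -
    have "2 * B / (real n - 1) * ((2 / C) * sqrt (real n) * (2 * B * T * s1 / (real n - 2)))
        = (B^2 / C) * (T * sqrt (real n) * s1) * (8 / ((real n - 1) * (real n - 2)))"
      using n4 C0 by (simp add: field_simps power2_eq_square)
    also have "\<dots> \<le> (B^2 / C) * (2 * (real n)^2 * \<rho> * y) * (8 / ((real n - 1) * (real n - 2)))"
    proof -
      have "T * sqrt (real n) * s1 \<le> (sqrt 2 * real n * \<rho>) * sqrt (real n) * (sqrt 2 * sqrt (real n) * y)"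
        unfolding Teq using s1le \<rho>0 by (intro mult_left_mono) auto
      also have "(sqrt 2 * real n * \<rho>) * sqrt (real n) * (sqrt 2 * sqrt (real n) * y) = 2 * (real n)^2 * \<rho> * y"
        using n0 by (simp add: power2_eq_square algebra_simps)
      finally have p: "T * sqrt (real n) * s1 \<le> 2 * (real n)^2 * \<rho> * y" .
      have "0 \<le> 8 / ((real n - 1) * (real n - 2))" using n4 by simp
      moreover have "0 \<le> B^2 / C" using C0 by simp
      ultimately show ?thesis using p by (intro mult_right_mono mult_left_mono) auto
    qed
    also have "(B^2 / C) * (2 * (real n)^2 * \<rho> * y) * (8 / ((real n - 1) * (real n - 2)))
        = 16 * ((B^2 / C) * y) * \<rho> * ((real n)^2 / ((real n - 1) * (real n - 2)))"
      by (simp add: field_simps)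
    also have "\<dots> \<le> 16 * (R / 2) * \<rho> * 3"
    proof -
      have "(real n)^2 / ((real n - 1) * (real n - 2)) \<le> 3"
      proof -
        have pos: "(real n - 1) * (real n - 2) > 0" using n4 by simp
        have "(real n)^2 \<le> 3 * ((real n - 1) * (real n - 2))"
        proof -
          have "0 \<le> (real n - 4) * (2 * real n - 1) + 2" using n4 by simp
          thus ?thesis by (simp add: power2_eq_square algebra_simps)
        qed
        thus ?thesis using pos by (simp add: divide_le_eq)
      qed
      moreover have "0 \<le> (B^2 / C) * y" using C0 y0 by simp
      moreover have "0 \<le> (real n)^2 / ((real n - 1) * (real n - 2))" using n4 by simp
      moreover have "0 \<le> R" using BR B0 by linarith
      ultimately show ?thesis using BCy \<rho>0 by (intro mult_mono) auto
    qed
    also have "\<dots> = 24 * R * \<rho>" by simp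
    finally show ?thesis .
  qed
  have Rpos: "R * \<rho> > 0" using BR B0 \<rho>0 by simp
  have "2 * B / (real n - 1) * (T + (2 / C) * sqrt (real n) * (2 * B * T * s1 / (real n - 2)))
      = 2 * B / (real n - 1) * T + 2 * B / (real n - 1) * ((2 / C) * sqrt (real n) * (2 * B * T * s1 / (real n - 2)))"
    by (simp add: distrib_left)
  also have "\<dots> \<le> 28 * R * \<rho>" using t1 t2 by linarith
  also have "\<dots> < 100 * R * \<rho>" using Rpos by simp
  finally show ?thesis unfolding T_def s1_def R_def \<rho>_def .
qed




lemma Lf_strict_mid:
  assumes "x \<noteq> y"
  shows "Lf ((x + y) / 2) < (Lf x + Lf y) / 2"
proof -
  define a where "a = exp (x / 2)"
  define b where "b = exp (y / 2)"
  have a0: "a > 0" and b0: "b > 0" by (simp_all add: a_def b_def)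
  have ab: "a \<noteq> b" using assms by (simp add: a_def b_def)
  have ex: "exp x = a^2" "exp y = b^2" "exp ((x + y) / 2) = a * b"
    by (simp_all add: a_def b_def power2_eq_square flip: exp_add)
  have "2 * a * b < a^2 + b^2"
  proof -
    have "0 < (a - b)^2" using ab by simp
    thus ?thesis by (simp add: power2_eq_square algebra_simps)
  qed
  hence lt: "(1 + a * b)^2 < (1 + a^2) * (1 + b^2)"
    by (simp add: power2_eq_square algebra_simps)
  have pab: "0 < 1 + a * b" using a0 b0 by (simp add: add_pos_pos)
  have "ln ((1 + a * b)^2) = real 2 * ln (1 + a * b)" by (rule ln_realpow)
  hence "2 * Lf ((x + y) / 2) = ln ((1 + a * b)^2)"
    unfolding Lf_def ex by simp
  also have "\<dots> < ln ((1 + a^2) * (1 + b^2))"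
  proof (subst ln_less_cancel_iff)
    show "0 < (1 + a * b)^2" using pab by simp
    show "0 < (1 + a^2) * (1 + b^2)" by (intro mult_pos_pos add_pos_nonneg) auto
  qed (rule lt)
  also have "\<dots> = Lf x + Lf y"
  proof -
    have "0 < 1 + a^2" "0 < 1 + b^2" by (intro add_pos_nonneg; simp)+
    thus ?thesis unfolding Lf_def ex by (simp add: ln_mult)
  qed
  finally show ?thesis by simp
qed

lemma no_mle_n2:
  assumes "is_restr_mle 2 r E b" "r \<le> 1"
  shows False
proof -
  have vp: "vpairs 2 = {(0,1)}" by (auto simp: vpairs_def)
  have ll: "loglik 2 E \<theta> = (\<theta> 0 + \<theta> 1) * ind E 0 1 - Lf (\<theta> 0 + \<theta> 1)" for \<theta>
    unfolding loglik_pairs vp by simp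
  have br: "b \<in> restr_space 2 r" and mx: "\<forall>b'\<in>restr_space 2 r. loglik 2 E b' \<le> loglik 2 E b"
    using assms by (auto simp: is_restr_mle_def)
  define s where "s = b 0 + b 1"
  have upd: "b(1 := b 1 + t) \<in> restr_space 2 r" for t
  proof -
    have "\<forall>i\<ge>2. b i = 0" using br unfolding restr_space_def by blast
    hence "\<forall>i\<ge>2. (b(1 := b 1 + t)) i = 0" by simp
    moreover have "\<forall>i<r. (b(1 := b 1 + t)) i = (b(1 := b 1 + t)) 0"
    proof (intro allI impI)
      fix i assume "i < r"
      hence "i = 0" using assms(2) by simp
      thus "(b(1 := b 1 + t)) i = (b(1 := b 1 + t)) 0" by simp
    qed
    ultimately show ?thesis unfolding restr_space_def by blast
  qed
  have Lmono: "Lf x < Lf y" if "x < y" for x y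
    unfolding Lf_def using that by (subst ln_less_cancel_iff) (auto simp: add_pos_pos)
  show False
  proof (cases "(0::nat,1::nat) \<in> E")
    case True
    have "loglik 2 E (b(1 := b 1 + 1)) \<le> loglik 2 E b" using mx upd by blast
    hence "(s + 1) - Lf (s + 1) \<le> s - Lf s" unfolding ll using True by (simp add: ind_def s_def algebra_simps)
    moreover have "Lf (s + 1) - Lf s < 1"
    proof -
      have "Lf (s + 1) = ln (1 + exp 1 * exp s)" by (simp add: Lf_def exp_add mult.commute)
      also have "\<dots> < ln (exp 1 * (1 + exp s))"
        by (subst ln_less_cancel_iff) (auto simp: add_pos_pos algebra_simps)
      also have "\<dots> = 1 + Lf s" by (simp add: ln_mult Lf_def add_pos_pos)
      finally show ?thesis by simp
    qed
    ultimately show False by simp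
  next
    case False
    have "loglik 2 E (b(1 := b 1 + -1)) \<le> loglik 2 E b" using mx upd by blast
    hence "- Lf (s - 1) \<le> - Lf s" unfolding ll using False by (simp add: ind_def s_def algebra_simps)
    moreover have "Lf (s - 1) < Lf s" by (rule Lmono) simp
    ultimately show False by simp
  qed
qed

lemma uniqueness:
  assumes r1: "1 \<le> r" and rn: "r \<le> n - 1" and b: "is_restr_mle n r E b" and b': "is_restr_mle n r E b'"
  shows "b = b'"
proof (rule ccontr)
  assume ne: "b \<noteq> b'"
  have n2: "n \<ge> 2" using r1 rn by linarith
  have br: "b \<in> restr_space n r" and b'r: "b' \<in> restr_space n r" using b b' by (auto simp: is_restr_mle_def)
  have n3: "n \<ge> 3"
  proof (rule ccontr)
    assume "\<not> n \<ge> 3"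
    hence "n = 2" using n2 by simp
    thus False using no_mle_n2[of r E b] b rn by simp
  qed
  define h where "h = (\<lambda>i. b i - b' i)"
  obtain i where i: "i < n" "h i \<noteq> 0"
  proof -
    obtain i where "b i \<noteq> b' i" using ne by blast
    moreover have "i < n"
    proof (rule ccontr)
      assume "\<not> i < n"
      hence "b i = 0" "b' i = 0" using br b'r unfolding restr_space_def by auto
      thus False using \<open>b i \<noteq> b' i\<close> by simp
    qed
    ultimately show ?thesis using that by (auto simp: h_def)
  qed
  have "\<exists>p\<in>vpairs n. h (fst p) + h (snd p) \<noteq> 0"
  proof (rule ccontr)
    assume "\<not> ?thesis"
    hence all: "h p + h q = 0" if "p < n" "q < n" "p \<noteq> q" for p q
    proof -
      assume A: "\<not> (\<exists>p\<in>vpairs n. h (fst p) + h (snd p) \<noteq> 0)"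
      show ?thesis
      proof (cases "p < q")
        case True thus ?thesis using A that by (auto simp: vpairs_def)
      next
        case False
        hence "q < p" using that by simp
        hence "h q + h p = 0" using A that by (auto simp: vpairs_def)
        thus ?thesis by simp
      qed
    qed
    obtain j k where jk: "j < n" "k < n" "j \<noteq> i" "k \<noteq> i" "j \<noteq> k"
    proof -
      have "card ({..<n} - {i}) \<ge> 2" using n3 i by simp
      then obtain S where "S \<subseteq> {..<n} - {i}" "card S = 2" by (meson obtain_subset_with_card_n)
      then obtain j k where "S = {j,k}" "j \<noteq> k" by (meson card_2_iff)
      thus ?thesis using that \<open>S \<subseteq> {..<n} - {i}\<close> by auto
    qed
    have "h i + h j = 0" "h i + h k = 0" "h j + h k = 0" using all jk i by auto
    hence "h i = 0" by linarith
    thus False using i by simp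
  qed
  then obtain p where p: "p \<in> vpairs n" "b (fst p) + b (snd p) \<noteq> b' (fst p) + b' (snd p)"
    by (auto simp: h_def)
  define m where "m = (\<lambda>i. (1 - 1/2) * b i + (1/2) * b' i)"
  have mr: "m \<in> restr_space n r"
  proof -
    have "m i = m 0" if "i < r" for i
    proof -
      have "b i = b 0" "b' i = b' 0" using br b'r that unfolding restr_space_def by blast+
      thus ?thesis by (simp add: m_def)
    qed
    moreover have "m i = 0" if "i \<ge> n" for i
    proof -
      have "b i = 0" "b' i = 0" using br b'r that unfolding restr_space_def by blast+
      thus ?thesis by (simp add: m_def)
    qed
    ultimately show ?thesis unfolding restr_space_def by blast
  qed
  have eq: "loglik n E b = loglik n E b'" using b b' br b'r by (auto simp: is_restr_mle_def intro: antisym)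
  have "loglik n E m > (loglik n E b + loglik n E b') / 2"
  proof -
    have "(loglik n E b + loglik n E b') / 2 =
        (\<Sum>(i,j)\<in>vpairs n. ((b i + b j + (b' i + b' j)) / 2) * ind E i j - (Lf (b i + b j) + Lf (b' i + b' j)) / 2)"
      unfolding loglik_pairs by (simp add: sum.distrib[symmetric] sum_divide_distrib case_prod_unfold algebra_simps diff_divide_distrib add_divide_distrib)
    also have "\<dots> < (\<Sum>(i,j)\<in>vpairs n. ((b i + b j + (b' i + b' j)) / 2) * ind E i j - Lf ((b i + b j + (b' i + b' j)) / 2))"
    proof (rule sum_strict_mono_ex1)
      show "finite (vpairs n)" by simp
      show "\<forall>x\<in>vpairs n. (case x of (i,j) \<Rightarrow> ((b i + b j + (b' i + b' j)) / 2) * ind E i j - (Lf (b i + b j) + Lf (b' i + b' j)) / 2)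
          \<le> (case x of (i,j) \<Rightarrow> ((b i + b j + (b' i + b' j)) / 2) * ind E i j - Lf ((b i + b j + (b' i + b' j)) / 2))"
      proof
        fix x assume "x \<in> vpairs n"
        obtain i j where x: "x = (i,j)" by force
        have "Lf ((b i + b j + (b' i + b' j)) / 2) \<le> (Lf (b i + b j) + Lf (b' i + b' j)) / 2"
        proof (cases "b i + b j = b' i + b' j")
          case True
          hence "(b i + b j + (b' i + b' j)) / 2 = b i + b j" by simp
          thus ?thesis using True by (simp only:) simp
        next
          case False thus ?thesis using Lf_strict_mid[OF False] by simp
        qed
        thus "(case x of (i,j) \<Rightarrow> ((b i + b j + (b' i + b' j)) / 2) * ind E i j - (Lf (b i + b j) + Lf (b' i + b' j)) / 2)
          \<le> (case x of (i,j) \<Rightarrow> ((b i + b j + (b' i + b' j)) / 2) * ind E i j - Lf ((b i + b j + (b' i + b' j)) / 2))"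
          by (simp add: x)
      qed
      show "\<exists>x\<in>vpairs n. (case x of (i,j) \<Rightarrow> ((b i + b j + (b' i + b' j)) / 2) * ind E i j - (Lf (b i + b j) + Lf (b' i + b' j)) / 2)
          < (case x of (i,j) \<Rightarrow> ((b i + b j + (b' i + b' j)) / 2) * ind E i j - Lf ((b i + b j + (b' i + b' j)) / 2))"
      proof (intro bexI[OF _ p(1)])
        obtain i j where x: "p = (i,j)" by force
        have "b i + b j \<noteq> b' i + b' j" using p(2) x by simp
        from Lf_strict_mid[OF this]
        show "(case p of (i,j) \<Rightarrow> ((b i + b j + (b' i + b' j)) / 2) * ind E i j - (Lf (b i + b j) + Lf (b' i + b' j)) / 2)
          < (case p of (i,j) \<Rightarrow> ((b i + b j + (b' i + b' j)) / 2) * ind E i j - Lf ((b i + b j + (b' i + b' j)) / 2))"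
          by (simp add: x)
      qed
    qed
    also have "\<dots> = loglik n E m"
      unfolding loglik_pairs by (intro sum.cong refl) (auto simp: m_def algebra_simps add_divide_distrib)
    finally show ?thesis .
  qed
  moreover have "loglik n E m \<le> loglik n E b" using b mr by (auto simp: is_restr_mle_def)
  ultimately show False using eq by simp
qed




lemma main_n:
  fixes n rr :: nat and \<beta> :: "nat \<Rightarrow> real"
  assumes n4: "4 \<le> n" and r1: "1 \<le> rr" and rn': "rr \<le> n - 1" and \<beta>r: "\<forall>i<rr. \<beta> i = \<beta> 0"
    and cq: "\<bar>cond_quantity n rr \<beta>\<bar> \<le> (1/1200) * \<bar>sqrt (real n / ln (real n))\<bar>"
  shows "beta_prob n \<beta> (\<lambda>E. \<exists>b. is_restr_mle n rr E b \<and>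
            sup_dist n b \<beta> \<le> 100 * rate n rr \<beta> * sqrt (ln (real n) / real n))
         \<ge> 1 - 2 * (real n - real rr + 1) / (real n)\<^sup>2"
proof -
  have rn: "rr < n" using rn' r1 by linarith
  define B where "B = bn n \<beta>"
  define Cc where "Cc = cn n \<beta>"
  have C0: "0 < Cc" using bn_cn_bounds(3)[of 0 n 1 \<beta>] n4 by (simp add: Cc_def)
  have CB: "Cc \<le> B" using bn_cn_bounds(1,2)[of 0 n 1 \<beta>] n4 by (simp add: Cc_def B_def)
  have B0: "0 < B" using C0 CB by linarith
  define X where "X = sqrt (real rr) * sqrt (real n - real rr) / (real n) powr (3/2) + (real n - real rr) / real n"
  have X0: "X \<ge> 0" unfolding X_def using rn by simp
  have rate_eq: "rate n rr \<beta> = B + B^3 / Cc^2 * X" by (simp add: rate_def B_def Cc_def X_def)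
  have rB: "rate n rr \<beta> \<ge> B" unfolding rate_eq using X0 B0 C0 by simp
  have rpos: "rate n rr \<beta> > 0" using rB B0 by linarith
  define F where "F = B / Cc + B^3 / Cc^3 * (real rr * (real n - real rr) / (real n)^2)"
  have F1: "F \<ge> 1"
  proof -
    have "B / Cc \<ge> 1" using CB C0 by simp
    moreover have "B^3 / Cc^3 * (real rr * (real n - real rr) / (real n)^2) \<ge> 0"
      using B0 C0 rn by (intro mult_nonneg_nonneg) auto
    ultimately show ?thesis unfolding F_def by linarith
  qed
  have cq_eq: "cond_quantity n rr \<beta> = F * rate n rr \<beta>" by (simp add: cond_quantity_def F_def B_def Cc_def)
  have cr: "cond_quantity n rr \<beta> \<ge> rate n rr \<beta>"
    unfolding cq_eq using F1 rpos by (simp add: mult_le_cancel_right1)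
  define \<rho> where "\<rho> = sqrt (ln (real n) / real n)"
  have ln0: "ln (real n) > 0" using n4 by simp
  have \<rho>0: "\<rho> > 0" unfolding \<rho>_def using ln0 n4 by simp
  have inv: "sqrt (real n / ln (real n)) * \<rho> = 1"
    unfolding \<rho>_def using ln0 n4 by (simp add: real_sqrt_mult[symmetric])
  have "rate n rr \<beta> * \<rho> \<le> cond_quantity n rr \<beta> * \<rho>" using cr \<rho>0 by (intro mult_right_mono) auto
  also have "\<dots> \<le> \<bar>cond_quantity n rr \<beta>\<bar> * \<rho>" using \<rho>0 by (intro mult_right_mono) auto
  also have "\<dots> \<le> (1/1200) * \<bar>sqrt (real n / ln (real n))\<bar> * \<rho>" using cq \<rho>0 by (intro mult_right_mono) auto
  also have "\<bar>sqrt (real n / ln (real n))\<bar> = sqrt (real n / ln (real n))" using ln0 by simp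
  also have "(1/1200) * sqrt (real n / ln (real n)) * \<rho> = 1/1200" using inv by simp
  finally have small: "rate n rr \<beta> * \<rho> \<le> 1/1200" .
  define \<delta> where "\<delta> = 100 * rate n rr \<beta> * \<rho>"
  have \<delta>0: "0 < \<delta>" unfolding \<delta>_def using rpos \<rho>0 by simp
  have \<delta>s: "6 * \<delta> \<le> 1/2" unfolding \<delta>_def using small by simp
  have de: "exp (6 * \<delta>) \<le> 2"
    using exp_half_le2 \<delta>s by (meson exp_le_cancel_iff order_trans)
  have big: "2 * bn n \<beta> / (real n - 1) * (sqrt (2 * real n * ln (real n)) + (2 / cn n \<beta>) * sqrt (real n) *
        (2 * bn n \<beta> * sqrt (2 * real n * ln (real n)) * sqrt (real n - real rr + 1) / (real n - 2))) < \<delta>"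
    using big_ineq[OF n4 r1 rn C0 CB] unfolding \<delta>_def \<rho>_def rate_def B_def Cc_def by simp
  have "beta_prob n \<beta> (good n rr \<beta>) \<le> beta_prob n \<beta> (\<lambda>E. \<exists>b. is_restr_mle n rr E b \<and> sup_dist n b \<beta> \<le> \<delta>)"
  proof (rule bp_mono)
    fix E assume "E \<subseteq> vpairs n" "good n rr \<beta> E"
    thus "\<exists>b. is_restr_mle n rr E b \<and> sup_dist n b \<beta> \<le> \<delta>"
      using deterministic[OF n4 _ rn \<beta>r \<delta>0 de _ _ big] r1 unfolding good_def by auto
  qed
  moreover have "beta_prob n \<beta> (good n rr \<beta>) \<ge> 1 - 2 * (real n - real rr + 1) / (real n)^2"
    using prob_good[of n rr \<beta>] n4 r1 rn by simp
  ultimately show ?thesis unfolding \<delta>_def \<rho>_def by simp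
qed

theorem lemma7:
  shows "(\<exists>C>0. \<forall>(beta :: nat \<Rightarrow> nat \<Rightarrow> real) (r :: nat \<Rightarrow> nat).
            ((\<forall>n\<ge>2. 1 \<le> r n \<and> r n \<le> n - 1 \<and> (\<forall>i<r n. beta n i = beta n 0)) \<and>
             (\<lambda>n. cond_quantity n (r n) (beta n)) \<in> o(\<lambda>n. sqrt (real n / ln (real n))))
            \<longrightarrow> (\<forall>\<^sub>F n in sequentially.
                   beta_prob n (beta n)
                     (\<lambda>E. \<exists>b. is_restr_mle n (r n) E b \<and>
                        sup_dist n b (beta n) \<le> C * rate n (r n) (beta n) * sqrt (ln (real n) / real n))
                   \<ge> 1 - 2 * (real n - real (r n) + 1) / (real n)\<^sup>2))
       \<and> (\<forall>n r E b b'. 1 \<le> r \<and> r \<le> n - 1 \<and> E \<subseteq> vpairs n \<and>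
            is_restr_mle n r E b \<and> is_restr_mle n r E b' \<longrightarrow> b = b')"
proof (intro conjI)
  show "\<forall>n r E b b'. 1 \<le> r \<and> r \<le> n - 1 \<and> E \<subseteq> vpairs n \<and>
            is_restr_mle n r E b \<and> is_restr_mle n r E b' \<longrightarrow> b = b'"
    using uniqueness by blast
  show "\<exists>C>0. \<forall>(beta :: nat \<Rightarrow> nat \<Rightarrow> real) (r :: nat \<Rightarrow> nat).
            ((\<forall>n\<ge>2. 1 \<le> r n \<and> r n \<le> n - 1 \<and> (\<forall>i<r n. beta n i = beta n 0)) \<and>
             (\<lambda>n. cond_quantity n (r n) (beta n)) \<in> o(\<lambda>n. sqrt (real n / ln (real n))))
            \<longrightarrow> (\<forall>\<^sub>F n in sequentially.
                   beta_prob n (beta n)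
                     (\<lambda>E. \<exists>b. is_restr_mle n (r n) E b \<and>
                        sup_dist n b (beta n) \<le> C * rate n (r n) (beta n) * sqrt (ln (real n) / real n))
                   \<ge> 1 - 2 * (real n - real (r n) + 1) / (real n)\<^sup>2)"
  proof (intro exI[of _ "100::real"] conjI allI impI)
    fix beta :: "nat \<Rightarrow> nat \<Rightarrow> real" and r :: "nat \<Rightarrow> nat"
    assume H: "(\<forall>n\<ge>2. 1 \<le> r n \<and> r n \<le> n - 1 \<and> (\<forall>i<r n. beta n i = beta n 0)) \<and>
             (\<lambda>n. cond_quantity n (r n) (beta n)) \<in> o(\<lambda>n. sqrt (real n / ln (real n)))"
    have ev: "\<forall>\<^sub>F n in sequentially. norm (cond_quantity n (r n) (beta n)) \<le> (1/1200) * norm (sqrt (real n / ln (real n)))"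
      using landau_o.smallD[OF conjunct2[OF H], of "1/1200"] by simp
    have ev4: "\<forall>\<^sub>F n in sequentially. n \<ge> 4" by (rule eventually_ge_at_top)
    show "\<forall>\<^sub>F n in sequentially.
                   beta_prob n (beta n)
                     (\<lambda>E. \<exists>b. is_restr_mle n (r n) E b \<and>
                        sup_dist n b (beta n) \<le> 100 * rate n (r n) (beta n) * sqrt (ln (real n) / real n))
                   \<ge> 1 - 2 * (real n - real (r n) + 1) / (real n)\<^sup>2"
      using ev ev4
    proof eventually_elim
      case (elim n)
      have n2: "n \<ge> 2" using elim(2) by simp
      have A: "1 \<le> r n \<and> r n \<le> n - 1 \<and> (\<forall>i<r n. beta n i = beta n 0)" using conjunct1[OF H] n2 by blast
      have cq: "\<bar>cond_quantity n (r n) (beta n)\<bar> \<le> (1/1200) * \<bar>sqrt (real n / ln (real n))\<bar>"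
        using elim(1) by (simp only: real_norm_def)
      from A have A1: "1 \<le> r n" and A2: "r n \<le> n - 1" and A3: "\<forall>i<r n. beta n i = beta n 0" by blast+
      show ?case by (rule main_n[OF elim(2) A1 A2 A3 cq])
    qed
  qed simp
qed


end
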